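(* Let $A>0$, $B\in\mathbb{R}$, $R>0$ with $0<4|B|R<\pi$, and $a_1(k)=1+\frac{A^2e^{4\mathrm{i} kR}}{4(k^2-B^2)}$. Let $\varphi$ denote the argument of $a_1$ defined as below. Then: 1) If $0<R<\frac{\pi}{2(4B^2+A^2)^{1/2}}$: $\varphi(k)\in(-\pi,\pi)$ for $k\in(-\infty,-|B|)$; $\lim_{k\uparrow-|B|}\varphi(k)=-\theta_{-|B|}$ with $\theta_{-|B|}\in(0,\pi)$; $\lim_{k\downarrow-|B|}\varphi(k)=\pi-\theta_{-|B|}$; and $\varphi(k)\in(0,\pi)$ for $k\in(-|B|,0)$. 2) If $\frac{(2n-1)\pi}{2(4B^2+A^2)^{1/2}}<R<\frac{(2n+1)\pi}{2(4B^2+A^2)^{1/2}}$ for some $n\in\mathbb{N}$, then with $\omega_{n+1}=-\infty$, $\omega_j=-\frac{(2j-1)\pi}{4R}$ ($j=1,\dots,n$), $\omega_0=-|B|$: $\varphi(\omega_{n-j+1})=(2j-1)\pi$ for $j=1,\dots,n$; $\varphi(k)\in(2\pi j-\pi,2\pi j+\pi)$ for $k\in(\omega_{n-j+1},\omega_{n-j})$, $j=0,\dots,n$; $\lim_{k\uparrow-|B|}\varphi(k)=2\pi n-\theta_{-|B|}$ with $\theta_{-|B|}\in(0,\pi)$; $\lim_{k\downarrow-|B|}\varphi(k)=2\pi n+\pi-\theta_{-|B|}$; and $\varphi(k)\in(2\pi n,2\pi n+\pi)$ for $k\in(-|B|,0)$. 3) $\lim_{k\uparrow0}\varphi(k)$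 equals: if $4B^2-A^2>0$, $0$ when $0<R<\frac{\pi}{2(4B^2+A^2)^{1/2}}$ and $2\pi n$ when $\frac{(2n-1)\pi}{2(4B^2+A^2)^{1/2}}<R<\frac{(2n+1)\pi}{2(4B^2+A^2)^{1/2}}$; if $4B^2-A^2<0$, $\pi$ when $0<R<\frac{\pi}{2(4B^2+A^2)^{1/2}}$ and $2\pi n+\pi$ when $\frac{(2n-1)\pi}{2(4B^2+A^2)^{1/2}}<R<\frac{(2n+1)\pi}{2(4B^2+A^2)^{1/2}}$.
   Context: $\varphi$ is the continuous branch of $\arg a_1(k)$ along the path that runs over the real axis from $-\infty$ to $0$, except that it bypasses the pole $k=-|B|$ along a small semicircle in the upper half-plane, normalized by $\varphi(k)\to0$ as $k\to-\infty$ (under the hypotheses $a_1$ does not vanish on this path). For $k\in(-\infty,0)\setminus\{-|B|\}$, $\varphi(k)$ is its value at the real point $k$. (In the paper this quantity is written as $\int_{-\infty}^kd\arg a_1$, and for $k>-|B|$ as $\int_{-|B|}^k d\arg a_1$.) *)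

theory Defs
  imports "HOL-Analysis.Analysis"
begin

definition a1 :: "real \<Rightarrow> real \<Rightarrow> real \<Rightarrow> complex \<Rightarrow> complex" where
  "a1 A B R k = 1 + (complex_of_real (A^2)) * exp (4 * \<i> * k * complex_of_real R)
                     / (4 * (k^2 - complex_of_real (B^2)))"

text \<open>The integration path, parametrised by t in (-infinity, 0): the real axis, except that
  for t in [-|B|-e, -|B|+e] it runs along the upper semicircle of radius e centred at -|B|
  (from -|B|-e over -|B|+i e to -|B|+e).\<close>
definition bypass_path :: "real \<Rightarrow> real \<Rightarrow> real \<Rightarrow> complex" where
  "bypass_path B e t =
     (if t \<le> -\<bar>B\<bar> - e \<or> t \<ge> -\<bar>B\<bar> + e then complex_of_real t
      else complex_of_real (-\<bar>B\<bar>) + complex_of_real e *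
             exp (\<i> * complex_of_real (pi * (1 - (t + \<bar>B\<bar>) / e) / 2)))"

definition is_arg_lift :: "real \<Rightarrow> real \<Rightarrow> real \<Rightarrow> real \<Rightarrow> (real \<Rightarrow> real) \<Rightarrow> bool" where
  "is_arg_lift A B R e Phi \<longleftrightarrow>
     continuous_on {..<0} Phi \<and>
     (\<forall>t<0. cis (Phi t) = sgn (a1 A B R (bypass_path B e t))) \<and>
     (Phi \<longlongrightarrow> 0) at_bot"

text \<open>varphi(k) for real k < 0, k /= -|B|: the value at k of the branch along the path with a
  sufficiently small semicircle.\<close>
definition arg_a1 :: "real \<Rightarrow> real \<Rightarrow> real \<Rightarrow> real \<Rightarrow> real" where
  "arg_a1 A B R k = (THE v. \<forall>\<^sub>F e in at_right 0. \<exists>Phi. is_arg_lift A B R e Phi \<and> Phi k = v)"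

definition omega :: "real \<Rightarrow> real \<Rightarrow> nat \<Rightarrow> real" where
  "omega B R j = (if j = 0 then -\<bar>B\<bar> else - (2 * real j - 1) * pi / (4 * R))"

end

theory Submission
  imports Defs "HOL-Real_Asymp.Real_Asymp"
begin


lemma a1_real:
  "a1 A B R (complex_of_real t) =
     Complex (1 + A^2 / (4 * (t^2 - B^2)) * cos (4*t*R)) (A^2 / (4 * (t^2 - B^2)) * sin (4*t*R))"
proof -
  have e: "exp (4 * \<i> * complex_of_real t * complex_of_real R) = cis (4*t*R)"
    by (simp add: cis_conv_exp mult_ac)
  have d: "4 * ((complex_of_real t)^2 - complex_of_real (B^2)) = complex_of_real (4*(t^2-B^2))"
    by simp
  show ?thesis unfolding a1_def e d
    by (simp add: complex_eq_iff cis.sel Re_divide_of_real Im_divide_of_real)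
qed

lemma sin_shift_int: "sin ((x::real) + 2*pi * of_int (j::int)) = sin x"
  unfolding sin_add by simp

lemma sin_pos_band:
  fixes j :: int assumes "-2*pi * of_int j < x" "x < -(2 * of_int j-1)*pi" shows "sin x > 0"
proof -
  have a: "0 < x + 2*pi * of_int j" "x + 2*pi * of_int j < pi"
    using assms by (simp_all add: algebra_simps)
  have "sin (x + 2*pi * of_int j) > 0"
    by (rule sin_gt_zero) (use a in auto)
  then show ?thesis by (simp only: sin_shift_int)
qed

lemma sin_neg_band:
  fixes j :: int assumes "-(2 * of_int j-1)*pi < x" "x < -(2 * of_int j-2)*pi" shows "sin x < 0"
proof -
  have a: "0 < x + 2*pi * of_int j - pi" "x + 2*pi * of_int j - pi < pi"
    using assms by (simp_all add: algebra_simps)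
  have "sin (x + 2*pi * of_int j - pi) > 0"
    by (rule sin_gt_zero) (use a in auto)
  moreover have "sin (x + 2*pi * of_int j) = - sin (x + 2*pi * of_int j - pi)"
    by (simp only: sin_periodic_pi[symmetric] diff_add_cancel)
  ultimately have "sin (x + 2*pi * of_int j) < 0" by linarith
  then show ?thesis by (simp only: sin_shift_int)
qed

lemma cis_eq_int:
  assumes "cis a = cis b" shows "\<exists>k::int. a = b + 2*pi*k"
proof -
  have "exp (\<i> * complex_of_real a) = exp (\<i> * complex_of_real b)"
    using assms by (simp add: cis_conv_exp)
  then obtain n::int where "\<i> * complex_of_real a = \<i> * complex_of_real b + (of_int (2 * n) * pi) * \<i>"
    using exp_eq by blast
  then have "complex_of_real a = complex_of_real (b + 2*pi*n)"
  proof -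
    assume h: "\<i> * complex_of_real a = \<i> * complex_of_real b + (of_int (2 * n) * pi) * \<i>"
    have "\<i> * complex_of_real a = \<i> * complex_of_real (b + 2*pi*n)"
      unfolding h by (simp add: algebra_simps)
    then show ?thesis by (metis complex_i_not_zero mult_cancel_left)
  qed
  then have "a = b + 2*pi*n" by (simp only: of_real_eq_iff)
  then show ?thesis by blast
qed

lemma sgn_nonpos_Reals: "(sgn (z::complex) \<in> \<real>\<^sub>\<le>\<^sub>0) = (z \<in> \<real>\<^sub>\<le>\<^sub>0)"
proof (cases "z = 0")
  case False
  then have "cmod z > 0" by simp
  then show ?thesis by (auto simp: complex_nonpos_Reals_iff divide_nonpos_pos divide_le_0_iff)
qed simp

lemma Arg_sgn: "Arg (sgn z) = Arg z"
proof (cases "z = 0")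
  case False
  have "sgn z = z / complex_of_real (cmod z)"
    by (simp add: sgn_div_norm scaleR_conv_of_real divide_inverse mult.commute)
  then show ?thesis using False by simp
qed simp

lemma lift_window0:
  fixes Phi :: "real \<Rightarrow> real"
  assumes S: "connected S" and c: "continuous_on S Phi" and nr: "\<And>t. t \<in> S \<Longrightarrow> cis (Phi t) \<notin> \<real>\<^sub>\<le>\<^sub>0"
  shows "\<exists>m::int. \<forall>t\<in>S. Phi t = 2*pi*m + Arg (cis (Phi t))"
proof -
  define h where "h t = (Phi t - Arg (cis (Phi t))) / (2*pi)" for t
  have hint: "\<exists>k::int. h t = of_int k" for t
  proof -
    have "cis (Phi t) = cis (Arg (cis (Phi t)))"
      by (simp add: cis_Arg)
    then obtain k::int where "Phi t = Arg (cis (Phi t)) + 2*pi*k" using cis_eq_int by blast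
    then have "Phi t - Arg (cis (Phi t)) = 2*pi*k" by simp
    then have "h t = k" unfolding h_def by simp
    then show ?thesis by blast
  qed
  have hc: "continuous_on S h"
    unfolding h_def
    by (intro continuous_intros c continuous_on_compose2[OF continuous_on_Arg] ) (use nr in auto)
  have "h constant_on S"
  proof (rule continuous_discrete_range_constant[OF S hc])
    fix x assume "x \<in> S"
    show "\<exists>e>0. \<forall>y. y \<in> S \<and> h y \<noteq> h x \<longrightarrow> e \<le> norm (h y - h x)"
    proof (intro exI[of _ 1] conjI allI impI)
      fix y assume "y \<in> S \<and> h y \<noteq> h x"
      moreover obtain a b :: int where "h y = a" "h x = b" using hint by metis
      ultimately show "1 \<le> norm (h y - h x)" by auto
    qed simp
  qed
  then obtain c0 where c0: "\<forall>t\<in>S. h t = c0" by (auto simp: constant_on_def)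
  show ?thesis
  proof (cases "S = {}")
    case True then show ?thesis by auto
  next
    case False
    then obtain t0 where "t0 \<in> S" by auto
    obtain k::int where "h t0 = k" using hint by metis
    then have "\<forall>t\<in>S. h t = k" using c0 \<open>t0 \<in> S\<close> by auto
    then show ?thesis unfolding h_def by (intro exI[of _ k]) (auto simp: field_simps)
  qed
qed

lemma lift_window:
  fixes Phi :: "real \<Rightarrow> real" and f :: "real \<Rightarrow> complex"
  assumes S: "connected S" and c: "continuous_on S Phi"
    and eq: "\<And>t. t \<in> S \<Longrightarrow> cis (Phi t) = sgn (f t)" and nr: "\<And>t. t \<in> S \<Longrightarrow> f t \<notin> \<real>\<^sub>\<le>\<^sub>0"
  shows "\<exists>m::int. \<forall>t\<in>S. Phi t = 2*pi*m + Arg (f t)"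
proof -
  have "\<exists>m::int. \<forall>t\<in>S. Phi t = 2*pi*m + Arg (cis (Phi t))"
    by (rule lift_window0[OF S c]) (use eq nr sgn_nonpos_Reals in auto)
  then show ?thesis using eq by (simp add: Arg_sgn)
qed

lemma lift_window_neg:
  fixes Phi :: "real \<Rightarrow> real" and f :: "real \<Rightarrow> complex"
  assumes S: "connected S" and c: "continuous_on S Phi"
    and eq: "\<And>t. t \<in> S \<Longrightarrow> cis (Phi t) = sgn (f t)" and nr: "\<And>t. t \<in> S \<Longrightarrow> - f t \<notin> \<real>\<^sub>\<le>\<^sub>0"
  shows "\<exists>m::int. \<forall>t\<in>S. Phi t = 2*pi*m + pi + Arg (- f t)"
proof -
  have "\<exists>m::int. \<forall>t\<in>S. Phi t - pi = 2*pi*m + Arg (- f t)"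
  proof (rule lift_window[OF S])
    show "continuous_on S (\<lambda>t. Phi t - pi)" by (intro continuous_intros c)
    fix t assume "t \<in> S"
    show "cis (Phi t - pi) = sgn (- f t)"
      using eq[OF \<open>t \<in> S\<close>] by (simp flip: minus_cis')
  qed (use nr in auto)
  then show ?thesis by (auto simp: algebra_simps)
qed




definition condn :: "real \<Rightarrow> real \<Rightarrow> real \<Rightarrow> nat \<Rightarrow> bool" where
  "condn A B R n \<longleftrightarrow> R < (2 * real n + 1) * pi / (2 * sqrt (4 * B^2 + A^2)) \<and>
      (n = 0 \<or> (2 * real n - 1) * pi / (2 * sqrt (4 * B^2 + A^2)) < R)"

locale prm =
  fixes A B R :: real
  assumes A: "A > 0" and R: "R > 0" and B0: "0 < 4*\<bar>B\<bar> * R" and Bpi: "4*\<bar>B\<bar> * R < pi"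

context prm
begin

lemma b_pos: "\<bar>B\<bar> > 0"
  using B0 R by (simp add: zero_less_mult_iff)

lemma sq_gt: "t < -\<bar>B\<bar> \<Longrightarrow> B^2 < t^2"
proof -
  assume "t < -\<bar>B\<bar>"
  then have "\<bar>B\<bar>^2 < (-t)^2" by (intro power_strict_mono) auto
  then show ?thesis by simp
qed

lemma sq_lt: "-\<bar>B\<bar> < t \<Longrightarrow> t < 0 \<Longrightarrow> t^2 < B^2"
proof -
  assume "-\<bar>B\<bar> < t" "t < 0"
  then have "(-t)^2 < \<bar>B\<bar>^2" by (intro power_strict_mono) auto
  then show ?thesis by simp
qed

lemma c_pos: "t < -\<bar>B\<bar> \<Longrightarrow> A^2/(4*(t^2-B^2)) > 0"
  using sq_gt A by simp

lemma c_neg: "-\<bar>B\<bar> < t \<Longrightarrow> t < 0 \<Longrightarrow> A^2/(4*(t^2-B^2)) < 0"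
  using sq_lt A by (simp add: divide_pos_neg)

lemma Im_af: "Im (a1 A B R (of_real t)) = A^2/(4*(t^2-B^2)) * sin(4 * t * R)"
  by (simp add: a1_real)

lemma Re_af: "Re (a1 A B R (of_real t)) = 1 + A^2/(4*(t^2-B^2)) * cos(4 * t * R)"
  by (simp add: a1_real)

lemma Im_right: assumes "-\<bar>B\<bar> < t" "t < 0" shows "Im (a1 A B R (of_real t)) > 0"
proof -
  have "-\<bar>B\<bar> * R < t * R" using mult_strict_right_mono[OF assms(1) R] by simp
  then have "-pi < 4 * t * R" using Bpi by (simp add: algebra_simps)
  moreover have "4 * t * R < 0" using assms R by (simp add: mult_neg_pos)
  ultimately have "sin (4 * t * R) < 0" using sin_neg_band[of 1 "4 * t * R"] by simp
  then have "A^2/(4 * (t^2-B^2)) * sin(4 * t * R) > 0" using c_neg[OF assms] by (intro mult_neg_neg)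
  then show ?thesis by (simp only: Im_af)
qed

lemma Im_left: assumes "t < -\<bar>B\<bar>" "-pi < 4 * t * R" shows "Im (a1 A B R (of_real t)) < 0"
proof -
  have "4 * t * R < 0" using assms R b_pos by (simp add: mult_neg_pos)
  then have "sin (4 * t * R) < 0" using sin_neg_band[of 1 "4 * t * R"] assms by simp
  then have "A^2/(4 * (t^2-B^2)) * sin(4 * t * R) < 0" using c_pos[OF assms(1)] by (rule mult_pos_neg[rotated])
  then show ?thesis by (simp only: Im_af)
qed

lemma ZS:
  assumes "t < -\<bar>B\<bar>" "a1 A B R (of_real t) \<in> \<real>\<^sub>\<le>\<^sub>0"
  shows "\<exists>i::nat. i \<ge> 1 \<and> 4 * t * R = -(2 * real i - 1) * pi \<and> A^2/(4*(t^2-B^2)) \<ge> 1"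
proof -
  have c: "A^2/(4*(t^2-B^2)) > 0" using c_pos assms by simp
  have "Im (a1 A B R (of_real t)) = 0" "Re (a1 A B R (of_real t)) \<le> 0"
    using assms(2) by (auto simp: complex_nonpos_Reals_iff)
  then have s0: "sin (4 * t * R) = 0" and r0: "1 + A^2/(4*(t^2-B^2)) * cos(4 * t * R) \<le> 0"
    using c by (auto simp: Im_af Re_af)
  then obtain m::int where m: "4 * t * R = of_int m * pi" using sin_zero_iff_int2 by blast
  have cosm: "cos (4 * t * R) = (if even m then 1 else -1)"
    unfolding m using cos_npi_int[of m] by (simp add: mult.commute)
  have odd: "odd m"
  proof
    assume "even m"
    then show False using r0 c cosm by simp
  qed
  then have cge: "A^2/(4*(t^2-B^2)) \<ge> 1" using r0 cosm by simp
  have "4 * t * R < 0" using assms R b_pos by (simp add: mult_neg_pos)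
  then have "of_int m * pi < 0" using m by simp
  then have "m < 0" by (simp add: mult_less_0_iff)
  from odd obtain k where k: "m = 2 * k+1" by (rule oddE)
  define i where "i = nat (-k)"
  have ki: "k \<le> -1" using k \<open>m<0\<close> by simp
  then have "real i = - of_int k" unfolding i_def by simp
  then have "4 * t * R = -(2 * real i - 1) * pi" using m k by (simp add: algebra_simps)
  moreover have "i \<ge> 1" unfolding i_def using ki by simp
  ultimately show ?thesis using cge by blast
qed

lemma om_lt: assumes "i \<ge> (1::nat)" shows "-(2 * real i - 1) * pi/(4 * R) < -\<bar>B\<bar>"
proof -
  have "\<bar>B\<bar> < pi/(4 * R)" using Bpi R by (simp add: field_simps)
  also have "pi/(4 * R) \<le> (2 * real i - 1) * pi/(4 * R)"
    using assms R by (intro divide_right_mono) (auto simp: field_simps)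
  finally have "\<bar>B\<bar> < (2 * real i - 1) * pi/(4 * R)" .
  moreover have "-(2 * real i - 1) * pi/(4 * R) = -((2 * real i - 1) * pi/(4 * R))" by (simp only: minus_mult_left minus_divide_left)
  ultimately show ?thesis by linarith
qed

lemma c_gt1:
  assumes "i \<ge> (1::nat)" "(2 * real i - 1) * pi/(2 * sqrt(4 * B^2+A^2)) < R"
  defines "t \<equiv> -(2 * real i - 1) * pi/(4 * R)"
  shows "A^2/(4*(t^2-B^2)) > 1"
proof -
  define s where "s = sqrt(4 * B^2+A^2)"
  have s: "s > 0" unfolding s_def using A by (simp add: add_nonneg_pos)
  have s2: "s^2 = 4 * B^2+A^2" unfolding s_def by simp
  have "(2 * real i - 1) * pi < R * (2 * s)" using assms(2) s unfolding s_def[symmetric] by (simp add: divide_less_eq)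
  then have x: "-t < s/2" unfolding t_def using R by (simp add: field_simps)
  have tb: "t < -\<bar>B\<bar>" unfolding t_def using om_lt[OF assms(1)] by simp
  have "(-t)^2 < (s/2)^2" using x tb by (intro power_strict_mono) auto
  then have "4*(t^2 - B^2) < A^2" using s2 by (simp add: power_divide)
  moreover have "t^2 - B^2 > 0" using sq_gt[OF tb] by simp
  ultimately show ?thesis by simp
qed

lemma c_lt1:
  assumes "i \<ge> (1::nat)" "R < (2 * real i - 1) * pi/(2 * sqrt(4 * B^2+A^2))"
  defines "t \<equiv> -(2 * real i - 1) * pi/(4 * R)"
  shows "A^2/(4*(t^2-B^2)) < 1"
proof -
  define s where "s = sqrt(4 * B^2+A^2)"
  have s: "s > 0" unfolding s_def using A by (simp add: add_nonneg_pos)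
  have s2: "s^2 = 4 * B^2+A^2" unfolding s_def by simp
  have "R * (2 * s) < (2 * real i - 1) * pi" using assms(2) s unfolding s_def[symmetric] by (simp add: less_divide_eq)
  then have x: "s/2 < -t" unfolding t_def using R by (simp add: field_simps)
  have tb: "t < -\<bar>B\<bar>" unfolding t_def using om_lt[OF assms(1)] by simp
  have "(s/2)^2 < (-t)^2" using x s by (intro power_strict_mono) auto
  then have "A^2 < 4*(t^2 - B^2)" using s2 by (simp add: power_divide)
  moreover have "t^2 - B^2 > 0" using sq_gt[OF tb] by simp
  ultimately show ?thesis by simp
qed

end



context prm
begin

lemma condn_le:
  assumes "condn A B R n" "1 \<le> i" "i \<le> n"
  shows "(2 * real i - 1) * pi / (2 * sqrt (4 * B^2 + A^2)) < R"
proof -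
  have "n \<noteq> 0" using assms by simp
  then have h: "(2 * real n - 1) * pi / (2 * sqrt (4 * B^2 + A^2)) < R" using assms(1) by (simp add: condn_def)
  have "(2 * real i - 1) * pi / (2 * sqrt (4 * B^2 + A^2)) \<le> (2 * real n - 1) * pi / (2 * sqrt (4 * B^2 + A^2))"
    using assms(3) by (intro divide_right_mono mult_right_mono) auto
  then show ?thesis using h by linarith
qed

lemma condn_ge:
  assumes "condn A B R n" "n + 1 \<le> i"
  shows "R < (2 * real i - 1) * pi / (2 * sqrt (4 * B^2 + A^2))"
proof -
  have h: "R < (2 * real n + 1) * pi / (2 * sqrt (4 * B^2 + A^2))" using assms(1) by (simp add: condn_def)
  have "(2 * real n + 1) * pi / (2 * sqrt (4 * B^2 + A^2)) \<le> (2 * real i - 1) * pi / (2 * sqrt (4 * B^2 + A^2))"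
    using assms(2) by (intro divide_right_mono mult_right_mono) auto
  then show ?thesis using h by linarith
qed

lemma t_of_4tR: "4 * t * R = x \<Longrightarrow> t = x / (4 * R)"
  using R by (auto simp: field_simps)

lemma regU:
  assumes "condn A B R n" "j \<le> n" "t < -\<bar>B\<bar>" "4 * t * R < -(2 * real j - 1) * pi"
    "j = n \<or> -(2 * real j + 1) * pi < 4 * t * R"
  shows "a1 A B R (of_real t) \<notin> \<real>\<^sub>\<le>\<^sub>0"
proof
  assume "a1 A B R (of_real t) \<in> \<real>\<^sub>\<le>\<^sub>0"
  from ZS[OF assms(3) this] obtain i::nat where i: "i \<ge> 1" "4 * t * R = -(2 * real i - 1) * pi"
    and c: "A^2/(4 * (t^2-B^2)) \<ge> 1" by blast
  have t: "t = -(2 * real i - 1) * pi / (4 * R)" using t_of_4tR[OF i(2)] .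
  have "i \<le> n"
  proof (rule ccontr)
    assume "\<not> i \<le> n"
    then have "A^2/(4 * (t^2-B^2)) < 1" unfolding t using c_lt1[OF i(1) condn_ge[OF assms(1)]] by simp
    then show False using c by simp
  qed
  have "(2 * real j - 1) * pi < (2 * real i - 1) * pi" using assms(4) i(2) by simp
  then have "real j < real i" by simp
  then have ji: "j < i" by simp
  show False
  proof (cases "j = n")
    case True then show ?thesis using ji \<open>i \<le> n\<close> by simp
  next
    case False
    then have "(2 * real i - 1) * pi < (2 * real j + 1) * pi" using assms(5) i(2) by simp
    then have "real i < real j + 1" by simp
    then show ?thesis using ji by simp
  qed
qed

lemma regV:
  assumes "condn A B R n" "1 \<le> j" "j \<le> n" "t < -\<bar>B\<bar>" "-2 * real j * pi < 4 * t * R"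
    "4 * t * R < -(2 * real j - 2) * pi"
  shows "- a1 A B R (of_real t) \<notin> \<real>\<^sub>\<le>\<^sub>0"
proof
  assume "- a1 A B R (of_real t) \<in> \<real>\<^sub>\<le>\<^sub>0"
  then have im: "Im (a1 A B R (of_real t)) = 0" and re: "Re (a1 A B R (of_real t)) \<ge> 0"
    by (auto simp: complex_nonpos_Reals_iff)
  have c: "A^2/(4 * (t^2-B^2)) > 0" using c_pos assms by simp
  have "sin (4 * t * R) = 0" using im A sq_gt[OF assms(4)] by (simp add: Im_af)
  then obtain m::int where m: "4 * t * R = of_int m * pi" using sin_zero_iff_int2 by blast
  have "(-2 * real j) * pi < of_int m * pi" using m assms(5) by simp
  then have "-2 * real j < of_int m" using mult_less_cancel_right_pos[OF pi_gt_zero] by blast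
  then have m1: "- 2 * int j < m" by linarith
  have "of_int m * pi < -(2 * real j - 2) * pi" using m assms(6) by simp
  then have "of_int m < -(2 * real j - 2)" by simp
  then have m2: "m < -(2 * int j - 2)" by linarith
  have mj: "m = -(2 * int j - 1)" using m1 m2 by simp
  have "odd m" using mj by simp
  then have cosm: "cos (4 * t * R) = -1" unfolding m using cos_npi_int[of m] by (simp add: mult.commute)
  have "4 * t * R = -(2 * real j - 1) * pi" using m mj by simp
  then have t: "t = -(2 * real j - 1) * pi / (4 * R)" by (rule t_of_4tR)
  have "A^2/(4 * (t^2-B^2)) > 1" unfolding t by (rule c_gt1[OF assms(2) condn_le[OF assms(1-3)]])
  then have "Re (a1 A B R (of_real t)) < 0" using cosm by (simp add: Re_af)
  then show False using re by simp
qed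

lemma omval:
  assumes "condn A B R n" "1 \<le> j" "j \<le> n"
  defines "t \<equiv> -(2 * real j - 1) * pi / (4 * R)"
  shows "Im (a1 A B R (of_real t)) = 0" "Re (a1 A B R (of_real t)) < 0" "Arg (- a1 A B R (of_real t)) = 0"
    "t < -\<bar>B\<bar>"
proof -
  have x: "4 * t * R = of_int (-(2 * int j - 1)) * pi" unfolding t_def using R by simp
  have "sin (4 * t * R) = 0" using sin_zero_iff_int2 x by blast
  then show im: "Im (a1 A B R (of_real t)) = 0" by (simp add: Im_af)
  have "cos (4 * t * R) = -1" unfolding x using cos_npi_int[of "-(2 * int j - 1)"] by (simp add: mult.commute)
  moreover have "A^2/(4 * (t^2-B^2)) > 1" unfolding t_def by (rule c_gt1[OF assms(2) condn_le[OF assms(1-3)]])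
  ultimately show re: "Re (a1 A B R (of_real t)) < 0" by (simp add: Re_af)
  show "Arg (- a1 A B R (of_real t)) = 0" using im re by (simp add: Arg_eq_0_iff complex_is_Real_iff)
  show "t < -\<bar>B\<bar>" unfolding t_def using om_lt[OF assms(2)] by simp
qed

end



definition gfun :: "real \<Rightarrow> real \<Rightarrow> real \<Rightarrow> complex \<Rightarrow> complex" where
  "gfun A B R z = (z + of_real \<bar>B\<bar>) + of_real (A^2) * exp (4 * \<i> * z * of_real R) / (4 * (z - of_real \<bar>B\<bar>))"

context prm
begin

lemma a1_gfun:
  assumes "z \<noteq> of_real \<bar>B\<bar>" "z \<noteq> - of_real \<bar>B\<bar>"
  shows "a1 A B R z = gfun A B R z / (z + of_real \<bar>B\<bar>)"
proof -
  have z1: "z - of_real \<bar>B\<bar> \<noteq> 0" "z + of_real \<bar>B\<bar> \<noteq> 0" using assms by (auto simp: add_eq_0_iff2)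
  have "complex_of_real (B^2) = (of_real \<bar>B\<bar>)^2" by (simp only: of_real_power[symmetric] power2_abs)
  then have d: "z^2 - complex_of_real (B^2) = (z - of_real \<bar>B\<bar>) * (z + of_real \<bar>B\<bar>)"
    by (simp add: power2_eq_square algebra_simps)
  define X where "X = complex_of_real (A^2) * exp (4 * \<i> * z * complex_of_real R)"
  have "gfun A B R z / (z + of_real \<bar>B\<bar>) = (z + of_real \<bar>B\<bar>) / (z + of_real \<bar>B\<bar>) + (X / (4 * (z - of_real \<bar>B\<bar>))) / (z + of_real \<bar>B\<bar>)"
    unfolding gfun_def X_def by (simp add: add_divide_distrib)
  also have "\<dots> = 1 + X / (4 * ((z - of_real \<bar>B\<bar>) * (z + of_real \<bar>B\<bar>)))"
    using z1 by (simp add: divide_divide_eq_left mult.assoc)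
  finally show ?thesis unfolding a1_def d X_def by simp
qed

lemma gfun_cont: "continuous (at (- of_real \<bar>B\<bar>)) (gfun A B R)"
proof -
  have e: "- of_real \<bar>B\<bar> - of_real \<bar>B\<bar> = complex_of_real (- 2 * \<bar>B\<bar>)" by simp
  have "complex_of_real (- 2 * \<bar>B\<bar>) \<noteq> 0" using b_pos by simp
  then have "- of_real \<bar>B\<bar> - of_real \<bar>B\<bar> \<noteq> (0::complex)" using e by simp
  then show ?thesis unfolding gfun_def by (intro continuous_intros) auto
qed

lemma gfun_at: "gfun A B R (- of_real \<bar>B\<bar>) = complex_of_real (A^2/(8 * \<bar>B\<bar>)) * cis (pi - 4 * \<bar>B\<bar> * R)"
proof -
  have e: "exp (4 * \<i> * (- of_real \<bar>B\<bar>) * of_real R) = cis (- (4 * \<bar>B\<bar> * R))"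
    by (simp add: cis_conv_exp mult_ac)
  have "- cis (- (4 * \<bar>B\<bar> * R)) = cis (pi - 4 * \<bar>B\<bar> * R)"
    using minus_cis[of "- (4 * \<bar>B\<bar> * R)"] by (simp add: algebra_simps)
  moreover have "gfun A B R (- of_real \<bar>B\<bar>) = - complex_of_real (A^2/(8 * \<bar>B\<bar>)) * cis (- (4 * \<bar>B\<bar> * R))"
    unfolding gfun_def e using b_pos by (simp add: field_simps)
  ultimately show ?thesis by (metis minus_mult_commute)
qed

lemma rcis_not_nonpos:
  assumes "r > 0" "-pi < x" "x < pi"
  shows "complex_of_real r * cis x \<notin> \<real>\<^sub>\<le>\<^sub>0"
proof
  assume "complex_of_real r * cis x \<in> \<real>\<^sub>\<le>\<^sub>0"
  then have "r * sin x = 0" "r * cos x \<le> 0" by (auto simp: complex_nonpos_Reals_iff)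
  then have "sin x = 0" "cos x \<le> 0" using assms(1) by (auto simp: mult_le_0_iff)
  then have "x = 0" using sin_eq_0_pi assms by blast
  then show False using \<open>cos x \<le> 0\<close> by simp
qed

lemma semi_ok:
  "\<exists>e1>0. e1 \<le> \<bar>B\<bar> \<and> (\<forall>e z \<alpha>. 0 < e \<and> e < e1 \<and> 0 \<le> \<alpha> \<and> \<alpha> \<le> pi \<and>
      z = of_real (-\<bar>B\<bar>) + of_real e * cis \<alpha> \<longrightarrow> a1 A B R z \<notin> \<real>\<^sub>\<le>\<^sub>0)"
proof -
  define g0 where "g0 = gfun A B R (- of_real \<bar>B\<bar>)"
  define r where "r = A^2/(8 * \<bar>B\<bar>)"
  define th where "th = 4 * \<bar>B\<bar> * R"
  have r: "r > 0" unfolding r_def using A b_pos by simp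
  have th: "0 < th" "th < pi" unfolding th_def using B0 Bpi by auto
  define K where "K = (\<lambda>\<alpha>. g0 * cis (-\<alpha>)) ` {0..pi}"
  have "compact K" unfolding K_def
    by (intro compact_continuous_image continuous_intros) auto
  moreover have "K \<inter> \<real>\<^sub>\<le>\<^sub>0 = {}"
  proof -
    have "g0 * cis (-\<alpha>) \<notin> \<real>\<^sub>\<le>\<^sub>0" if "0 \<le> \<alpha>" "\<alpha> \<le> pi" for \<alpha>
    proof -
      have "g0 * cis (-\<alpha>) = complex_of_real r * cis (pi - th - \<alpha>)"
        unfolding g0_def gfun_at r_def th_def by (simp add: mult.assoc cis_mult)
      then show ?thesis using rcis_not_nonpos[OF r, of "pi - th - \<alpha>"] that th by simp
    qed
    then show ?thesis unfolding K_def by auto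
  qed
  ultimately obtain d where d: "d > 0" "\<forall>x\<in>K. \<forall>y\<in>\<real>\<^sub>\<le>\<^sub>0. d \<le> dist x y"
    using separate_compact_closed[of K "\<real>\<^sub>\<le>\<^sub>0"] by auto
  obtain \<delta> where \<delta>: "\<delta> > 0" "\<forall>z. dist z (- of_real \<bar>B\<bar>) < \<delta> \<longrightarrow> dist (gfun A B R z) g0 < d"
    using gfun_cont d(1) unfolding continuous_at_eps_delta g0_def by blast
  define e1 where "e1 = min \<delta> \<bar>B\<bar>"
  have "e1 > 0" unfolding e1_def using \<delta> b_pos by simp
  moreover have "e1 \<le> \<bar>B\<bar>" unfolding e1_def by simp
  moreover have "a1 A B R z \<notin> \<real>\<^sub>\<le>\<^sub>0"
    if e: "0 < e" "e < e1" and al: "0 \<le> \<alpha>" "\<alpha> \<le> pi" and z: "z = of_real (-\<bar>B\<bar>) + of_real e * cis \<alpha>" for e z \<alpha>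
  proof
    assume neg: "a1 A B R z \<in> \<real>\<^sub>\<le>\<^sub>0"
    have zb: "z + of_real \<bar>B\<bar> = of_real e * cis \<alpha>" using z by simp
    have nz: "norm (z + of_real \<bar>B\<bar>) = e" using zb e by (simp add: norm_mult)
    have z1: "z \<noteq> - of_real \<bar>B\<bar>" using nz e by auto
    have z2: "z \<noteq> of_real \<bar>B\<bar>"
    proof
      assume "z = of_real \<bar>B\<bar>"
      then have "norm (z + of_real \<bar>B\<bar>) = 2 * \<bar>B\<bar>" by (simp add: norm_mult)
      then show False using nz e unfolding e1_def using b_pos by simp
    qed
    have "dist z (- of_real \<bar>B\<bar>) = e" using nz by (simp add: dist_norm)
    then have gd: "dist (gfun A B R z) g0 < d" using \<delta> e unfolding e1_def by simp
    have "a1 A B R z = gfun A B R z / (of_real e * cis \<alpha>)" using a1_gfun[OF z2 z1] zb by simp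
    then have h: "cis \<alpha> * (of_real e * a1 A B R z) = gfun A B R z"
      using e by (simp add: field_simps)
    have "cis (-\<alpha>) * (cis \<alpha> * (of_real e * a1 A B R z)) = of_real e * a1 A B R z"
      by (simp add: mult.assoc[symmetric] cis_mult)
    then have "of_real e * a1 A B R z = gfun A B R z * cis (-\<alpha>)" using h by (simp add: mult.commute)
    moreover have "of_real e * a1 A B R z \<in> \<real>\<^sub>\<le>\<^sub>0"
      using neg e by (auto simp: complex_nonpos_Reals_iff mult_nonneg_nonpos)
    ultimately have y: "gfun A B R z * cis (-\<alpha>) \<in> \<real>\<^sub>\<le>\<^sub>0" by simp
    have x: "g0 * cis (-\<alpha>) \<in> K" unfolding K_def using al by auto
    have "dist (g0 * cis (-\<alpha>)) (gfun A B R z * cis (-\<alpha>)) = dist (gfun A B R z) g0"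
      by (simp add: dist_norm norm_mult flip: left_diff_distrib) (simp add: norm_minus_commute)
    then show False using d(2) x y gd by fastforce
  qed
  ultimately show ?thesis by blast
qed

end



lemma cis_shift_int: "cis (x + 2 * pi * of_int m) = cis x"
  by (simp add: cis_mult[symmetric])

lemma path_real: "t \<le> -\<bar>B\<bar> - e \<or> -\<bar>B\<bar> + e \<le> t \<Longrightarrow> bypass_path B e t = of_real t"
  by (auto simp: bypass_path_def)

lemma path_semi: "-\<bar>B\<bar> - e < t \<Longrightarrow> t < -\<bar>B\<bar> + e \<Longrightarrow>
   bypass_path B e t = of_real (-\<bar>B\<bar>) + of_real e * cis (pi * (1 - (t + \<bar>B\<bar>) / e) / 2)"
  by (auto simp: bypass_path_def cis_conv_exp)

lemma path_angle:
  assumes "e > 0" "-\<bar>B\<bar> - e < t" "t < -\<bar>B\<bar> + e"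
  shows "0 \<le> pi * (1 - (t + \<bar>B\<bar>) / e) / 2" "pi * (1 - (t + \<bar>B\<bar>) / e) / 2 \<le> pi"
proof -
  define u where "u = (t + \<bar>B\<bar>) / e"
  have "-1 < u" "u < 1" unfolding u_def using assms by (auto simp: field_simps)
  then have "0 \<le> pi * (1 - u)" "pi * (1 - u) \<le> pi * 2" by (auto intro!: mult_left_mono)
  then show "0 \<le> pi * (1 - (t + \<bar>B\<bar>) / e) / 2" "pi * (1 - (t + \<bar>B\<bar>) / e) / 2 \<le> pi"
    unfolding u_def[symmetric] by auto
qed

lemma path_cont:
  assumes e: "e > 0"
  shows "continuous_on UNIV (bypass_path B e)"
proof -
  define semi where "semi t = complex_of_real (-\<bar>B\<bar>) + complex_of_real e *
             exp (\<i> * complex_of_real (pi * (1 - (t + \<bar>B\<bar>) / e) / 2))" for t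
  have sa: "semi (-\<bar>B\<bar> - e) = of_real (-\<bar>B\<bar> - e)"
    unfolding semi_def using e by (simp add: cis_conv_exp[symmetric])
  have sb: "semi (-\<bar>B\<bar> + e) = of_real (-\<bar>B\<bar> + e)"
    unfolding semi_def using e by simp
  have eq: "bypass_path B e = (\<lambda>t. if t \<le> -\<bar>B\<bar> - e then complex_of_real t else
                 (if t \<le> -\<bar>B\<bar> + e then semi t else complex_of_real t))"
  proof
    fix t show "bypass_path B e t = (if t \<le> -\<bar>B\<bar> - e then complex_of_real t else
                 (if t \<le> -\<bar>B\<bar> + e then semi t else complex_of_real t))"
      using sb by (cases "t = -\<bar>B\<bar> + e") (auto simp: bypass_path_def semi_def)
  qed
  have cs: "continuous_on S semi" for S unfolding semi_def using e by (intro continuous_intros) auto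
  have inner: "continuous_on {x \<in> UNIV. -\<bar>B\<bar> - e \<le> x} (\<lambda>t. if t \<le> -\<bar>B\<bar> + e then semi t else complex_of_real t)"
    by (rule continuous_on_cases_le[where h = "\<lambda>x. x"]) (use sb cs in \<open>auto intro!: continuous_intros\<close>)
  show ?thesis unfolding eq
    by (rule continuous_on_cases_le[where h = "\<lambda>x. x"])
       (use sa e inner in \<open>auto intro!: continuous_intros\<close>)
qed

context prm
begin

lemma path_ne:
  assumes "0 < e" "e < \<bar>B\<bar>" "t < 0"
  shows "bypass_path B e t \<noteq> of_real \<bar>B\<bar>" "bypass_path B e t \<noteq> - of_real \<bar>B\<bar>"
proof -
  have "bypass_path B e t \<noteq> of_real \<bar>B\<bar> \<and> bypass_path B e t \<noteq> - of_real \<bar>B\<bar>"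
  proof (cases "t \<le> -\<bar>B\<bar> - e \<or> -\<bar>B\<bar> + e \<le> t")
    case True
    then have p: "bypass_path B e t = of_real t" by (rule path_real)
    have "t \<noteq> \<bar>B\<bar>" "t \<noteq> -\<bar>B\<bar>" using True assms b_pos by auto
    then show ?thesis unfolding p by (metis of_real_eq_iff of_real_minus)
  next
    case False
    define z where "z = bypass_path B e t"
    have "z + of_real \<bar>B\<bar> = of_real e * cis (pi * (1 - (t + \<bar>B\<bar>) / e) / 2)"
      unfolding z_def using path_semi[of B e t] False by auto
    then have nz: "norm (z + of_real \<bar>B\<bar>) = e" using assms by (simp add: norm_mult)
    have "z \<noteq> of_real \<bar>B\<bar>"
    proof
      assume "z = of_real \<bar>B\<bar>"
      then have "norm (z + of_real \<bar>B\<bar>) = 2 * \<bar>B\<bar>" by (simp add: norm_mult)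
      then show False using nz assms by simp
    qed
    moreover have "z \<noteq> - of_real \<bar>B\<bar>" using nz assms by auto
    ultimately show ?thesis unfolding z_def by blast
  qed
  then show "bypass_path B e t \<noteq> of_real \<bar>B\<bar>" "bypass_path B e t \<noteq> - of_real \<bar>B\<bar>" by auto
qed

lemma a1_path_cont:
  assumes "0 < e" "e < \<bar>B\<bar>"
  shows "continuous_on {..<0} (\<lambda>t. a1 A B R (bypass_path B e t))"
proof -
  have "4 * ((bypass_path B e t)^2 - complex_of_real (B^2)) \<noteq> 0" if "t < 0" for t
  proof -
    have "complex_of_real (B^2) = (of_real \<bar>B\<bar>)^2" by (simp only: of_real_power[symmetric] power2_abs)
    then have d: "(bypass_path B e t)^2 - complex_of_real (B^2) =
       (bypass_path B e t - of_real \<bar>B\<bar>) * (bypass_path B e t + of_real \<bar>B\<bar>)"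
      by (simp add: power2_eq_square algebra_simps)
    have "bypass_path B e t - of_real \<bar>B\<bar> \<noteq> 0" "bypass_path B e t + of_real \<bar>B\<bar> \<noteq> 0"
      using path_ne[OF assms that] by (auto simp: add_eq_0_iff2)
    then show ?thesis unfolding d by simp
  qed
  moreover have "continuous_on {..<0} (bypass_path B e)"
    using path_cont[OF assms(1)] continuous_on_subset by blast
  ultimately show ?thesis unfolding a1_def
    by (intro continuous_intros) auto
qed

lemma abs_mult_cos_le: "\<bar>(a::real) * cos x\<bar> \<le> \<bar>a\<bar>"
  unfolding abs_mult by (rule mult_left_le[OF abs_cos_le_one abs_ge_zero])

lemma abs_mult_sin_le: "\<bar>(a::real) * sin x\<bar> \<le> \<bar>a\<bar>"
  unfolding abs_mult by (rule mult_left_le[OF abs_sin_le_one abs_ge_zero])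

lemma c_tendsto: "((\<lambda>t. A^2/(4 * (t^2-B^2))) \<longlongrightarrow> 0) at_bot"
  by real_asymp

lemma a1_at_bot: "((\<lambda>t. a1 A B R (of_real t)) \<longlongrightarrow> 1) at_bot"
proof -
  have 1: "((\<lambda>t. A^2/(4 * (t^2-B^2)) * cos (4 * t * R)) \<longlongrightarrow> 0) at_bot"
    by (rule Lim_null_comparison[OF _ tendsto_rabs_zero[OF c_tendsto]])
       (intro always_eventually allI, simp only: real_norm_def, rule abs_mult_cos_le)
  have 2: "((\<lambda>t. A^2/(4 * (t^2-B^2)) * sin (4 * t * R)) \<longlongrightarrow> 0) at_bot"
    by (rule Lim_null_comparison[OF _ tendsto_rabs_zero[OF c_tendsto]])
       (intro always_eventually allI, simp only: real_norm_def, rule abs_mult_sin_le)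
  have "((\<lambda>t. Complex (1 + A^2/(4 * (t^2-B^2)) * cos (4 * t * R)) (A^2/(4 * (t^2-B^2)) * sin (4 * t * R)))
         \<longlongrightarrow> Complex (1 + 0) 0) at_bot"
    by (intro tendsto_intros 1 2)
  then show ?thesis by (simp add: a1_real one_complex.code)
qed

lemma far_left: "\<forall>\<^sub>F t in at_bot. a1 A B R (of_real t) \<notin> \<real>\<^sub>\<le>\<^sub>0"
proof -
  have "\<forall>\<^sub>F t in at_bot. norm (a1 A B R (of_real t) - 1) < 1"
    using a1_at_bot unfolding tendsto_iff dist_norm by auto
  then show ?thesis
  proof (rule eventually_mono)
    fix t assume h: "norm (a1 A B R (of_real t) - 1) < 1"
    have "\<bar>Re (a1 A B R (of_real t) - 1)\<bar> < 1" using h abs_Re_le_cmod le_less_trans by blast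
    then have "Re (a1 A B R (of_real t)) > 0" by simp
    then show "a1 A B R (of_real t) \<notin> \<real>\<^sub>\<le>\<^sub>0" by (auto simp: complex_nonpos_Reals_iff)
  qed
qed

end



lemma ov_core:
  fixes k :: int assumes "of_int k * (2 * pi) < pi" "- pi < of_int k * (2 * pi)"
  shows "k = 0"
proof -
  have "of_int k * (2 * pi) < 1 * (2 * pi)" using assms(1) pi_gt_zero by linarith
  have "(-1) * (2 * pi) < of_int k * (2 * pi)" using assms(2) pi_gt_zero by linarith
  then have "of_int k < (1::real)" "(-1::real) < of_int k"
    using \<open>of_int k * (2 * pi) < 1 * (2 * pi)\<close>
    using mult_less_cancel_right_pos[of "2 * pi"] pi_gt_zero by (metis zero_less_mult_iff zero_less_numeral)+
  then have "k < 1" "-1 < k" by linarith+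
  then show ?thesis by simp
qed

lemma ov1:
  fixes m p :: int
  assumes "2 * pi * m + a = 2 * pi * p + pi + b" "0 < a" "a < pi" "-pi < b" "b < 0"
  shows "m = p"
proof -
  have "of_int (m - p) * (2 * pi) = pi + b - a" using assms(1) by (simp add: algebra_simps)
  then have "m - p = 0" using assms by (intro ov_core) auto
  then show ?thesis by simp
qed

lemma ov2:
  fixes m p :: int
  assumes "2 * pi * p + pi + b = 2 * pi * m + a" "0 < b" "b < pi" "-pi < a" "a < 0"
  shows "m = p + 1"
proof -
  have "of_int (m - p - 1) * (2 * pi) = b - a - pi" using assms(1) by (simp add: algebra_simps)
  then have "m - p - 1 = 0" using assms by (intro ov_core) auto
  then show ?thesis by simp
qed

lemma ov0:
  fixes m q :: int
  assumes "2 * pi * m + a = 2 * pi * q + a" shows "m = q"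
  using assms by simp

lemma conn3: "connected {t::real. t < a \<and> t < b \<and> (P \<or> c < t)}"
proof (cases P)
  case True
  then have "{t::real. t < a \<and> t < b \<and> (P \<or> c < t)} = {..<min a b}" by auto
  then show ?thesis by (simp add: convex_connected)
next
  case False
  then have "{t::real. t < a \<and> t < b \<and> (P \<or> c < t)} = {c<..<min a b}" by auto
  then show ?thesis by (simp add: convex_connected)
qed

lemma conn2: "connected {t::real. c < t \<and> t < a \<and> t < b}"
proof -
  have "{t::real. c < t \<and> t < a \<and> t < b} = {c<..<min a b}" by auto
  then show ?thesis by (simp add: convex_connected)
qed

context prm
begin

lemma nz_real:
  assumes "condn A B R n" "t < -\<bar>B\<bar>"
  shows "a1 A B R (of_real t) \<noteq> 0"
proof
  assume z: "a1 A B R (of_real t) = 0"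
  then have "a1 A B R (of_real t) \<in> \<real>\<^sub>\<le>\<^sub>0" by simp
  from ZS[OF assms(2) this] obtain i::nat where i: "i \<ge> 1" "4 * t * R = -(2 * real i - 1) * pi"
    and c: "A^2/(4 * (t^2-B^2)) \<ge> 1" by blast
  have t: "t = -(2 * real i - 1) * pi / (4 * R)" using t_of_4tR[OF i(2)] .
  show False
  proof (cases "i \<le> n")
    case True
    have "Re (a1 A B R (of_real t)) < 0" unfolding t by (rule omval(2)[OF assms(1) i(1) True])
    then show False using z by simp
  next
    case False
    then have "A^2/(4 * (t^2-B^2)) < 1" unfolding t using c_lt1[OF i(1) condn_ge[OF assms(1)]] by simp
    then show False using c by simp
  qed
qed

lemma semi_nonpos:
  assumes "0 < e" "e < e1" "e1 \<le> \<bar>B\<bar>"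
    and e1: "\<forall>e z \<alpha>. 0 < e \<and> e < e1 \<and> 0 \<le> \<alpha> \<and> \<alpha> \<le> pi \<and>
      z = of_real (-\<bar>B\<bar>) + of_real e * cis \<alpha> \<longrightarrow> a1 A B R z \<notin> \<real>\<^sub>\<le>\<^sub>0"
    and t: "-\<bar>B\<bar> - e < t" "t < -\<bar>B\<bar> + e"
  shows "a1 A B R (bypass_path B e t) \<notin> \<real>\<^sub>\<le>\<^sub>0"
  using e1 path_semi[OF t] path_angle[OF assms(1) t] assms(1,2) by blast

lemma lift_exists:
  assumes cn: "condn A B R n" and e: "0 < e" "e < e1" "e1 \<le> \<bar>B\<bar>"
    and e1: "\<forall>e z \<alpha>. 0 < e \<and> e < e1 \<and> 0 \<le> \<alpha> \<and> \<alpha> \<le> pi \<and>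
      z = of_real (-\<bar>B\<bar>) + of_real e * cis \<alpha> \<longrightarrow> a1 A B R z \<notin> \<real>\<^sub>\<le>\<^sub>0"
  shows "\<exists>Phi. is_arg_lift A B R e Phi"
proof -
  have eb: "e < \<bar>B\<bar>" using e by simp
  have nz: "a1 A B R (bypass_path B e t) \<noteq> 0" if "t < 0" for t
  proof (cases "t \<le> -\<bar>B\<bar> - e")
    case True
    then show ?thesis using path_real[of t B e] nz_real[OF cn, of t] e by auto
  next
    case False
    show ?thesis
    proof (cases "-\<bar>B\<bar> + e \<le> t")
      case True
      then have "Im (a1 A B R (of_real t)) > 0" using Im_right[of t] that e by simp
      then show ?thesis using path_real[of t B e] True by auto
    next
      case False2: False
      have "a1 A B R (bypass_path B e t) \<notin> \<real>\<^sub>\<le>\<^sub>0"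
        by (rule semi_nonpos[OF e e1]) (use False False2 in auto)
      then show ?thesis by auto
    qed
  qed
  define F where "F t = sgn (a1 A B R (bypass_path B e t))" for t
  have Fc: "continuous_on {..<0} F" unfolding F_def
    by (intro continuous_intros a1_path_cont e eb) (use nz in auto)
  have Fnz: "F t \<noteq> 0" if "t \<in> {..<0}" for t using nz that unfolding F_def by (simp add: sgn_zero_iff)
  obtain G where Gc: "continuous_on {..<0} G" and G: "\<And>t. t \<in> {..<0} \<Longrightarrow> F t = exp (G t)"
    using continuous_logarithm_on_contractible[OF Fc convex_imp_contractible Fnz] by auto
  define Phi0 where "Phi0 t = Im (G t)" for t
  have P0c: "continuous_on {..<0} Phi0" unfolding Phi0_def by (intro continuous_intros Gc)
  have P0: "cis (Phi0 t) = F t" if "t < 0" for t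
  proof -
    have "norm (F t) = 1" using nz[of t] that unfolding F_def by (simp add: norm_sgn)
    then have "exp (Re (G t)) = 1" using G[of t] that by (simp add: norm_exp_eq_Re)
    then have "Re (G t) = 0" by simp
    then show ?thesis using G[of t] that unfolding Phi0_def by (simp add: exp_eq_polar)
  qed
  obtain N where N: "\<And>t. t \<le> N \<Longrightarrow> a1 A B R (of_real t) \<notin> \<real>\<^sub>\<le>\<^sub>0"
    using far_left unfolding eventually_at_bot_linorder by blast
  define N' where "N' = min N (-\<bar>B\<bar> - e - 1)"
  have N'b: "N' < 0" unfolding N'_def using b_pos e by simp
  have "\<exists>m::int. \<forall>t\<in>{..<N'}. Phi0 t = 2 * pi * m + Arg (a1 A B R (bypass_path B e t))"
  proof (rule lift_window)
    show "continuous_on {..<N'} Phi0" using N'b by (intro continuous_on_subset[OF P0c]) auto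
    fix t assume t: "t \<in> {..<N'}"
    show "cis (Phi0 t) = sgn (a1 A B R (bypass_path B e t))" using P0[of t] t N'b unfolding F_def by simp
    have "bypass_path B e t = of_real t" using t unfolding N'_def by (intro path_real) auto
    then show "a1 A B R (bypass_path B e t) \<notin> \<real>\<^sub>\<le>\<^sub>0" using N[of t] t unfolding N'_def by simp
  qed (simp add: convex_connected)
  then obtain m::int where m: "\<And>t. t < N' \<Longrightarrow> Phi0 t = 2 * pi * m + Arg (a1 A B R (bypass_path B e t))"
    by auto
  define Phi where "Phi t = Phi0 t - 2 * pi * m" for t
  have "continuous_on {..<0} Phi" unfolding Phi_def by (intro continuous_intros P0c)
  moreover have "\<forall>t<0. cis (Phi t) = sgn (a1 A B R (bypass_path B e t))"
  proof (intro allI impI)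
    fix t :: real assume "t < 0"
    have "cis (Phi t) = cis (Phi0 t + 2 * pi * of_int (-m))" unfolding Phi_def by simp
    also have "\<dots> = cis (Phi0 t)" by (rule cis_shift_int)
    finally show "cis (Phi t) = sgn (a1 A B R (bypass_path B e t))" using P0 \<open>t<0\<close> unfolding F_def by simp
  qed
  moreover have "(Phi \<longlongrightarrow> 0) at_bot"
  proof -
    have ev: "\<forall>\<^sub>F t in at_bot. Arg (a1 A B R (of_real t)) = Phi t"
      unfolding eventually_at_bot_linorder
    proof (intro exI[of _ "N' - 1"] allI impI)
      fix t :: real assume "t \<le> N' - 1"
      then have "bypass_path B e t = of_real t" unfolding N'_def by (intro path_real) auto
      then show "Arg (a1 A B R (of_real t)) = Phi t" using m[of t] \<open>t \<le> N' - 1\<close> unfolding Phi_def by simp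
    qed
    have "((\<lambda>t. Arg (a1 A B R (of_real t))) \<longlongrightarrow> Arg 1) at_bot"
      by (rule tendsto_Arg[OF a1_at_bot]) simp
    then show ?thesis using tendsto_cong[OF ev] by simp
  qed
  ultimately show ?thesis unfolding is_arg_lift_def by blast
qed

end



context prm
begin

lemma kk_lt: "t < c * (pi / (4 * R)) \<longleftrightarrow> 4 * t * R < c * pi"
  using R by (simp add: field_simps)

lemma kk_gt: "c * (pi / (4 * R)) < t \<longleftrightarrow> c * pi < 4 * t * R"
  using R by (simp add: field_simps)

lemma kk_b: "\<bar>B\<bar> < pi / (4 * R)"
  using Bpi R by (simp add: field_simps)

lemma Arg_pos_range: "Im z > 0 \<Longrightarrow> 0 < Arg z \<and> Arg z < pi"
  using Arg_lt_pi by blast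

lemma Arg_neg_range: "Im z < 0 \<Longrightarrow> -pi < Arg z \<and> Arg z < 0"
  using Arg_neg_iff mpi_less_Arg by blast

lemma lift_vals:
  assumes cn: "condn A B R n" and e: "0 < e" "e < e1" "e1 \<le> \<bar>B\<bar>"
    and e1: "\<forall>e z \<alpha>. 0 < e \<and> e < e1 \<and> 0 \<le> \<alpha> \<and> \<alpha> \<le> pi \<and>
      z = of_real (-\<bar>B\<bar>) + of_real e * cis \<alpha> \<longrightarrow> a1 A B R z \<notin> \<real>\<^sub>\<le>\<^sub>0"
    and eW: "e < pi / (4 * R) - \<bar>B\<bar>"
    and lift: "is_arg_lift A B R e Phi"
  shows "\<forall>j\<le>n. \<forall>t. t < -\<bar>B\<bar> - e \<and> t < -(2 * real j - 1) * pi / (4 * R) \<and>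
             (j = n \<or> -(2 * real j + 1) * pi / (4 * R) < t) \<longrightarrow>
             Phi t = 2 * pi * (real n - real j) + Arg (a1 A B R (of_real t))"
    and "\<forall>j. 1 \<le> j \<and> j \<le> n \<longrightarrow> Phi (-(2 * real j - 1) * pi / (4 * R)) = 2 * pi * (real n - real j) + pi"
    and "\<forall>t. -\<bar>B\<bar> + e \<le> t \<and> t < 0 \<longrightarrow> Phi t = 2 * pi * real n + Arg (a1 A B R (of_real t))"
proof -
  define kk where "kk = pi / (4 * R)"
  have kk: "kk > 0" "\<bar>B\<bar> < kk" unfolding kk_def using R kk_b by auto
  have eW': "e < kk - \<bar>B\<bar>" using eW unfolding kk_def .
  have Pc: "continuous_on {..<0} Phi" and Pcis: "\<And>t. t < 0 \<Longrightarrow> cis (Phi t) = sgn (a1 A B R (bypass_path B e t))"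
    and Plim: "(Phi \<longlongrightarrow> 0) at_bot"
    using lift unfolding is_arg_lift_def by auto
  have om: "-(2 * real j - 1) * pi / (4 * R) = -(2 * real j - 1) * kk" for j unfolding kk_def by simp
  have om2: "-(2 * real j + 1) * pi / (4 * R) = -(2 * real j + 1) * kk" for j unfolding kk_def by simp
  have ltc: "t < c * kk \<longleftrightarrow> 4 * t * R < c * pi" for t c unfolding kk_def by (rule kk_lt)
  have gtc: "c * kk < t \<longleftrightarrow> c * pi < 4 * t * R" for t c unfolding kk_def by (rule kk_gt)
  define U where "U j = {t. t < -\<bar>B\<bar> - e \<and> t < -(2 * real j - 1) * kk \<and> (j = n \<or> -(2 * real j + 1) * kk < t)}" for j
  define V where "V j = {t. -2 * real j * kk < t \<and> t < -(2 * real j - 2) * kk \<and> t < -\<bar>B\<bar> - e}" for j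
  define Y where "Y = {-kk<..<0::real}"
  have realp: "bypass_path B e t = of_real t" if "t \<le> -\<bar>B\<bar> - e" for t using that by (intro path_real) auto
  have Uex: "\<exists>m::int. j \<le> n \<longrightarrow> (\<forall>t\<in>U j. Phi t = 2 * pi * m + Arg (a1 A B R (of_real t)))" for j
  proof (cases "j \<le> n")
    case True
    have "\<exists>m::int. \<forall>t\<in>U j. Phi t = 2 * pi * m + Arg (a1 A B R (bypass_path B e t))"
    proof (rule lift_window)
      show "connected (U j)" unfolding U_def by (rule conn3)
      show "continuous_on (U j) Phi" using b_pos e by (intro continuous_on_subset[OF Pc]) (auto simp: U_def)
      fix t assume t: "t \<in> U j"
      show "cis (Phi t) = sgn (a1 A B R (bypass_path B e t))" using t b_pos e by (intro Pcis) (auto simp: U_def)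
      have "a1 A B R (of_real t) \<notin> \<real>\<^sub>\<le>\<^sub>0"
        using t e by (intro regU[OF cn True]) (auto simp: U_def ltc gtc)
      then show "a1 A B R (bypass_path B e t) \<notin> \<real>\<^sub>\<le>\<^sub>0" using realp[of t] t by (auto simp: U_def)
    qed
    then obtain m::int where "\<forall>t\<in>U j. Phi t = 2 * pi * m + Arg (a1 A B R (bypass_path B e t))" by blast
    then have "\<forall>t\<in>U j. Phi t = 2 * pi * m + Arg (a1 A B R (of_real t))" using realp by (auto simp: U_def)
    then show ?thesis by blast
  qed simp
  define M where "M j = (SOME m::int. j \<le> n \<longrightarrow> (\<forall>t\<in>U j. Phi t = 2 * pi * m + Arg (a1 A B R (of_real t))))" for j
  have M: "\<And>j t. j \<le> n \<Longrightarrow> t \<in> U j \<Longrightarrow> Phi t = 2 * pi * M j + Arg (a1 A B R (of_real t))"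
  proof -
    fix j t assume "j \<le> n" "t \<in> U j"
    from someI_ex[OF Uex[of j]] show "Phi t = 2 * pi * M j + Arg (a1 A B R (of_real t))"
      unfolding M_def[symmetric] using \<open>j \<le> n\<close> \<open>t \<in> U j\<close> by blast
  qed
  have Vex: "\<exists>p::int. 1 \<le> j \<and> j \<le> n \<longrightarrow> (\<forall>t\<in>V j. Phi t = 2 * pi * p + pi + Arg (- a1 A B R (of_real t)))" for j
  proof (cases "1 \<le> j \<and> j \<le> n")
    case True
    have "\<exists>p::int. \<forall>t\<in>V j. Phi t = 2 * pi * p + pi + Arg (- a1 A B R (bypass_path B e t))"
    proof (rule lift_window_neg)
      show "connected (V j)" unfolding V_def by (rule conn2)
      show "continuous_on (V j) Phi" using b_pos e by (intro continuous_on_subset[OF Pc]) (auto simp: V_def)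
      fix t assume t: "t \<in> V j"
      show "cis (Phi t) = sgn (a1 A B R (bypass_path B e t))" using t b_pos e by (intro Pcis) (auto simp: V_def)
      from t have t1: "-2 * real j * kk < t" "t < -(2 * real j - 2) * kk" "t < -\<bar>B\<bar> - e"
        by (auto simp: V_def)
      have t2: "-2 * real j * pi < 4 * t * R" using t1(1) by (simp only: gtc)
      have t3: "4 * t * R < -(2 * real j - 2) * pi" using t1(2) by (simp only: ltc)
      have "- a1 A B R (of_real t) \<notin> \<real>\<^sub>\<le>\<^sub>0"
        using True t1(3) e by (intro regV[OF cn _ _ _ t2 t3]) auto
      then show "- a1 A B R (bypass_path B e t) \<notin> \<real>\<^sub>\<le>\<^sub>0" using realp[of t] t by (auto simp: V_def)
    qed
    then obtain p::int where "\<forall>t\<in>V j. Phi t = 2 * pi * p + pi + Arg (- a1 A B R (bypass_path B e t))" by blast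
    then have "\<forall>t\<in>V j. Phi t = 2 * pi * p + pi + Arg (- a1 A B R (of_real t))" using realp by (auto simp: V_def)
    then show ?thesis by blast
  qed blast
  define P where "P j = (SOME p::int. 1 \<le> j \<and> j \<le> n \<longrightarrow> (\<forall>t\<in>V j. Phi t = 2 * pi * p + pi + Arg (- a1 A B R (of_real t))))" for j
  have P: "\<And>j t. 1 \<le> j \<Longrightarrow> j \<le> n \<Longrightarrow> t \<in> V j \<Longrightarrow> Phi t = 2 * pi * P j + pi + Arg (- a1 A B R (of_real t))"
  proof -
    fix j t assume "1 \<le> j" "j \<le> n" "t \<in> V j"
    from someI_ex[OF Vex[of j]] show "Phi t = 2 * pi * P j + pi + Arg (- a1 A B R (of_real t))"
      unfolding P_def[symmetric] using \<open>1 \<le> j\<close> \<open>j \<le> n\<close> \<open>t \<in> V j\<close> by blast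
  qed
  have "\<exists>q::int. \<forall>t\<in>Y. Phi t = 2 * pi * q + Arg (a1 A B R (bypass_path B e t))"
  proof (rule lift_window)
    show "connected Y" unfolding Y_def by (simp add: convex_connected)
    show "continuous_on Y Phi" by (intro continuous_on_subset[OF Pc]) (auto simp: Y_def)
    fix t assume t: "t \<in> Y"
    show "cis (Phi t) = sgn (a1 A B R (bypass_path B e t))" using t by (intro Pcis) (auto simp: Y_def)
    show "a1 A B R (bypass_path B e t) \<notin> \<real>\<^sub>\<le>\<^sub>0"
    proof (cases "t \<le> -\<bar>B\<bar> - e")
      case True
      have "-kk < t" using t by (auto simp: Y_def)
      then have "(-1) * pi < 4 * t * R" using gtc[of "-1" t] by simp
      then have "Im (a1 A B R (of_real t)) < 0" using True e by (intro Im_left) auto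
      then show ?thesis using realp[OF True] by (auto simp: complex_nonpos_Reals_iff)
    next
      case False
      show ?thesis
      proof (cases "-\<bar>B\<bar> + e \<le> t")
        case True
        then have "Im (a1 A B R (of_real t)) > 0" using t e by (intro Im_right) (auto simp: Y_def)
        then show ?thesis using path_real[of t B e] True by (auto simp: complex_nonpos_Reals_iff)
      next
        case False2: False
        show ?thesis by (rule semi_nonpos[OF e e1]) (use False False2 in auto)
      qed
    qed
  qed
  then obtain q::int where q: "\<And>t. t \<in> Y \<Longrightarrow> Phi t = 2 * pi * q + Arg (a1 A B R (bypass_path B e t))" by blast
  have Mn: "M n = 0"
  proof -
    define T where "T = min (-\<bar>B\<bar> - e) (-(2 * real n - 1) * kk) - 1"
    have ev: "\<forall>\<^sub>F t in at_bot. 2 * pi * M n + Arg (a1 A B R (of_real t)) = Phi t"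
      unfolding eventually_at_bot_linorder
    proof (intro exI[of _ T] allI impI)
      fix t assume "t \<le> T"
      then have "t \<in> U n" unfolding U_def T_def by auto
      then show "2 * pi * M n + Arg (a1 A B R (of_real t)) = Phi t" using M[of n t] by simp
    qed
    have "((\<lambda>t. 2 * pi * M n + Arg (a1 A B R (of_real t))) \<longlongrightarrow> 2 * pi * M n + Arg 1) at_bot"
      by (intro tendsto_intros tendsto_Arg[OF a1_at_bot]) simp
    then have "(Phi \<longlongrightarrow> 2 * pi * M n) at_bot" using tendsto_cong[OF ev] by simp
    then have "2 * pi * M n = 0" using tendsto_unique[OF trivial_limit_at_bot_linorder _ Plim] by blast
    then show ?thesis by simp
  qed
  have MP: "M j = P j" if j: "1 \<le> j" "j \<le> n" for j
  proof -
    define t1 where "t1 = -(2 * real j - 1/2) * kk"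
    have jge: "real j \<ge> 1" using j by simp
    have "t1 < -(2 * real j - 1) * kk" unfolding t1_def using kk by (simp add: algebra_simps)
    moreover have "-(2 * real j - 1) * kk \<le> - kk" using jge kk by (simp add: algebra_simps)
    ultimately have t1b: "t1 < -\<bar>B\<bar> - e" using eW' by linarith
    have t1U: "t1 \<in> U j" unfolding U_def using t1b \<open>t1 < -(2 * real j - 1) * kk\<close> kk
      by (auto simp: t1_def algebra_simps)
    have t1V: "t1 \<in> V j" unfolding V_def using t1b kk by (auto simp: t1_def algebra_simps)
    have x: "4 * t1 * R = -(2 * real j - 1/2) * pi" unfolding t1_def kk_def using R by simp
    have "sin (4 * t1 * R) > 0" using sin_pos_band[of "int j" "4 * t1 * R"] unfolding x
      by (simp add: algebra_simps)
    then have "A^2/(4 * (t1^2-B^2)) * sin (4 * t1 * R) > 0"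
      using c_pos[of t1] t1b e by (intro mult_pos_pos) auto
    then have im: "Im (a1 A B R (of_real t1)) > 0" by (simp only: Im_af)
    have "2 * pi * M j + Arg (a1 A B R (of_real t1)) = 2 * pi * P j + pi + Arg (- a1 A B R (of_real t1))"
      using M[OF j(2) t1U] P[OF j t1V] by simp
    then show ?thesis
      by (rule ov1) (use Arg_pos_range[OF im] Arg_neg_range[of "- a1 A B R (of_real t1)"] im in auto)
  qed
  have MP2: "M (j - 1) = P j + 1" if j: "1 \<le> j" "j \<le> n" for j
  proof -
    define lo where "lo = -(2 * real j - 1) * kk"
    define hi where "hi = min (-\<bar>B\<bar> - e) (-(2 * real j - 2) * kk)"
    define t2 where "t2 = (lo + hi) / 2"
    have jge: "real j \<ge> 1" using j by simp
    have "lo \<le> - kk" unfolding lo_def using jge kk by (simp add: algebra_simps)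
    then have "lo < -\<bar>B\<bar> - e" using eW' by linarith
    moreover have "lo < -(2 * real j - 2) * kk" unfolding lo_def using kk by (simp add: algebra_simps)
    ultimately have lohi: "lo < hi" unfolding hi_def by simp
    have t2a: "lo < t2" "t2 < hi" unfolding t2_def using lohi by auto
    have t2b: "t2 < -\<bar>B\<bar> - e" "t2 < -(2 * real j - 2) * kk" using t2a unfolding hi_def by auto
    have "-2 * real j * kk < lo" unfolding lo_def using kk by (simp add: algebra_simps)
    then have t2V: "t2 \<in> V j" unfolding V_def using t2a t2b by auto
    have rj: "real (j - 1) = real j - 1" using j by simp
    have "-(2 * real j - 2) * kk < -(2 * (real j - 1) - 1) * kk" using kk by (simp add: algebra_simps)
    then have t2U: "t2 \<in> U (j - 1)" unfolding U_def rj using t2a t2b unfolding lo_def by (auto simp: algebra_simps)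
    have "-(2 * real j - 1) * pi < 4 * t2 * R" using t2a unfolding lo_def gtc by simp
    moreover have "4 * t2 * R < -(2 * real j - 2) * pi" using t2b unfolding ltc by simp
    ultimately have "sin (4 * t2 * R) < 0" using sin_neg_band[of "int j" "4 * t2 * R"] by simp
    then have "A^2/(4 * (t2^2-B^2)) * sin (4 * t2 * R) < 0"
      using c_pos[of t2] t2b e by (intro mult_pos_neg) auto
    then have im: "Im (a1 A B R (of_real t2)) < 0" by (simp only: Im_af)
    have "2 * pi * P j + pi + Arg (- a1 A B R (of_real t2)) = 2 * pi * M (j - 1) + Arg (a1 A B R (of_real t2))"
      using M[of "j - 1" t2] t2U P[OF j t2V] j by simp
    then show ?thesis
      by (rule ov2) (use Arg_neg_range[OF im] Arg_pos_range[of "- a1 A B R (of_real t2)"] im in auto)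
  qed
  have Mi: "\<forall>i\<le>n. M (n - i) = int i"
  proof (intro allI impI)
    fix i assume "i \<le> n"
    then show "M (n - i) = int i"
    proof (induction i)
      case 0 then show ?case using Mn by simp
    next
      case (Suc i)
      have "M (n - i - 1) = P (n - i) + 1" using MP2[of "n - i"] Suc.prems by simp
      moreover have "M (n - i) = P (n - i)" using MP[of "n - i"] Suc.prems by simp
      ultimately show ?case using Suc by simp
    qed
  qed
  have Mj: "real_of_int (M j) = real n - real j" if "j \<le> n" for j
  proof -
    have "M j = int (n - j)" using Mi[rule_format, of "n - j"] that by simp
    then show ?thesis using that by simp
  qed
  show "\<forall>j\<le>n. \<forall>t. t < -\<bar>B\<bar> - e \<and> t < -(2 * real j - 1) * pi / (4 * R) \<and>
             (j = n \<or> -(2 * real j + 1) * pi / (4 * R) < t) \<longrightarrow>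
             Phi t = 2 * pi * (real n - real j) + Arg (a1 A B R (of_real t))"
  proof (intro allI impI)
    fix j t assume j: "j \<le> n" and t: "t < -\<bar>B\<bar> - e \<and> t < -(2 * real j - 1) * pi / (4 * R) \<and>
             (j = n \<or> -(2 * real j + 1) * pi / (4 * R) < t)"
    then have "t \<in> U j" unfolding U_def om om2 by auto
    then show "Phi t = 2 * pi * (real n - real j) + Arg (a1 A B R (of_real t))" using M[OF j] Mj[OF j] by simp
  qed
  show "\<forall>j. 1 \<le> j \<and> j \<le> n \<longrightarrow> Phi (-(2 * real j - 1) * pi / (4 * R)) = 2 * pi * (real n - real j) + pi"
  proof (intro allI impI)
    fix j assume j: "1 \<le> j \<and> j \<le> n"
    define t where "t = -(2 * real j - 1) * kk"
    have jge: "real j \<ge> 1" using j by simp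
    have "t \<le> - kk" unfolding t_def using jge kk by (simp add: algebra_simps)
    then have "t < -\<bar>B\<bar> - e" using eW' by linarith
    then have tV: "t \<in> V j" unfolding V_def t_def using kk by (auto simp: algebra_simps)
    have "Arg (- a1 A B R (of_real t)) = 0" unfolding t_def om[symmetric] using omval(3)[OF cn] j by simp
    then have "Phi t = 2 * pi * P j + pi" using P[of j t] j tV by simp
    moreover have "real_of_int (P j) = real n - real j" using MP[of j] Mj[of j] j by simp
    ultimately show "Phi (-(2 * real j - 1) * pi / (4 * R)) = 2 * pi * (real n - real j) + pi"
      unfolding om t_def by simp
  qed
  have qn: "q = M 0"
  proof -
    define t3 where "t3 = (-kk + (-\<bar>B\<bar> - e)) / 2"
    have "-kk < -\<bar>B\<bar> - e" using eW' by simp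
    then have t3a: "-kk < t3" "t3 < -\<bar>B\<bar> - e" unfolding t3_def by auto
    then have t3Y: "t3 \<in> Y" unfolding Y_def using b_pos e by auto
    have t3U: "t3 \<in> U 0" unfolding U_def using t3a kk b_pos e by auto
    have "2 * pi * q + Arg (a1 A B R (of_real t3)) = 2 * pi * M 0 + Arg (a1 A B R (of_real t3))"
      using q[OF t3Y] M[OF _ t3U] realp[of t3] t3a by simp
    then show ?thesis by (rule ov0)
  qed
  show "\<forall>t. -\<bar>B\<bar> + e \<le> t \<and> t < 0 \<longrightarrow> Phi t = 2 * pi * real n + Arg (a1 A B R (of_real t))"
  proof (intro allI impI)
    fix t assume t: "-\<bar>B\<bar> + e \<le> t \<and> t < 0"
    then have "t \<in> Y" unfolding Y_def using kk e by auto
    moreover have "bypass_path B e t = of_real t" using t by (intro path_real) auto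
    ultimately show "Phi t = 2 * pi * real n + Arg (a1 A B R (of_real t))"
      using q[of t] qn Mj[of 0] by simp
  qed
qed

end



lemma arg_a1_eqI:
  assumes "\<exists>e0>0. \<forall>e. 0 < e \<and> e < e0 \<longrightarrow> (\<exists>Phi. is_arg_lift A B R e Phi) \<and> (\<forall>Phi. is_arg_lift A B R e Phi \<longrightarrow> Phi k = v)"
  shows "arg_a1 A B R k = v"
proof -
  obtain e0 where e0: "e0 > 0" "\<And>e. 0 < e \<Longrightarrow> e < e0 \<Longrightarrow> (\<exists>Phi. is_arg_lift A B R e Phi) \<and> (\<forall>Phi. is_arg_lift A B R e Phi \<longrightarrow> Phi k = v)"
    using assms by blast
  have ev: "\<forall>\<^sub>F e in at_right 0. e \<in> {0<..<e0}" using eventually_at_right_real[OF e0(1)] .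
  show ?thesis unfolding arg_a1_def
  proof (rule the_equality)
    show "\<forall>\<^sub>F e in at_right 0. \<exists>Phi. is_arg_lift A B R e Phi \<and> Phi k = v"
      using ev by (rule eventually_mono) (use e0(2) in auto)
  next
    fix v' assume h: "\<forall>\<^sub>F e in at_right 0. \<exists>Phi. is_arg_lift A B R e Phi \<and> Phi k = v'"
    have "\<forall>\<^sub>F e in at_right (0::real). v' = v"
      using eventually_conj[OF h ev] by (rule eventually_mono) (use e0(2) in auto)
    then show "v' = v" by simp
  qed
qed

definition vals :: "real \<Rightarrow> real \<Rightarrow> real \<Rightarrow> nat \<Rightarrow> real \<Rightarrow> (real \<Rightarrow> real) \<Rightarrow> bool" where
  "vals A B R n e Phi \<longleftrightarrow>
       (\<forall>j\<le>n. \<forall>t. t < -\<bar>B\<bar> - e \<and> t < -(2 * real j - 1) * pi / (4 * R) \<and>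
             (j = n \<or> -(2 * real j + 1) * pi / (4 * R) < t) \<longrightarrow>
             Phi t = 2 * pi * (real n - real j) + Arg (a1 A B R (of_real t))) \<and>
       (\<forall>j. 1 \<le> j \<and> j \<le> n \<longrightarrow> Phi (-(2 * real j - 1) * pi / (4 * R)) = 2 * pi * (real n - real j) + pi) \<and>
       (\<forall>t. -\<bar>B\<bar> + e \<le> t \<and> t < 0 \<longrightarrow> Phi t = 2 * pi * real n + Arg (a1 A B R (of_real t)))"

context prm
begin

lemma setup_e:
  "\<exists>e0>0. \<forall>e n. condn A B R n \<and> 0 < e \<and> e < e0 \<longrightarrow> (\<exists>Phi. is_arg_lift A B R e Phi) \<and>
      (\<forall>Phi. is_arg_lift A B R e Phi \<longrightarrow> vals A B R n e Phi)"
proof -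
  obtain e1 where e1: "e1 > 0" "e1 \<le> \<bar>B\<bar>" "\<forall>e z \<alpha>. 0 < e \<and> e < e1 \<and> 0 \<le> \<alpha> \<and> \<alpha> \<le> pi \<and>
      z = of_real (-\<bar>B\<bar>) + of_real e * cis \<alpha> \<longrightarrow> a1 A B R z \<notin> \<real>\<^sub>\<le>\<^sub>0"
    using semi_ok by blast
  define e0 where "e0 = min e1 (pi / (4 * R) - \<bar>B\<bar>)"
  have "e0 > 0" unfolding e0_def using e1 kk_b by simp
  moreover have "\<exists>Phi. is_arg_lift A B R e Phi" if "condn A B R n" "0 < e" "e < e0" for e n
    using lift_exists[OF that(1,2) _ e1(2,3)] that unfolding e0_def by simp
  moreover have "vals A B R n e Phi"
    if "condn A B R n" "0 < e" "e < e0" "is_arg_lift A B R e Phi" for e n Phi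
  proof -
    have a: "e < e1" "e < pi / (4 * R) - \<bar>B\<bar>" using that unfolding e0_def by auto
    show ?thesis using lift_vals[OF that(1,2) a(1) e1(2,3) a(2) that(4)] unfolding vals_def by blast
  qed
  ultimately show ?thesis by blast
qed

lemma val_U:
  assumes cn: "condn A B R n" and j: "j \<le> n" and k: "k < -\<bar>B\<bar>" "k < -(2 * real j - 1) * pi / (4 * R)"
    "j = n \<or> -(2 * real j + 1) * pi / (4 * R) < k"
  shows "arg_a1 A B R k = 2 * pi * (real n - real j) + Arg (a1 A B R (of_real k))"
proof (rule arg_a1_eqI)
  obtain e0 where e0: "e0 > 0" "\<forall>e n. condn A B R n \<and> 0 < e \<and> e < e0 \<longrightarrow> (\<exists>Phi. is_arg_lift A B R e Phi) \<and>
      (\<forall>Phi. is_arg_lift A B R e Phi \<longrightarrow> vals A B R n e Phi)"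
    using setup_e by blast
  show "\<exists>e0>0. \<forall>e. 0 < e \<and> e < e0 \<longrightarrow> (\<exists>Phi. is_arg_lift A B R e Phi) \<and>
      (\<forall>Phi. is_arg_lift A B R e Phi \<longrightarrow> Phi k = 2 * pi * (real n - real j) + Arg (a1 A B R (of_real k)))"
  proof (intro exI[of _ "min e0 (-\<bar>B\<bar> - k)"] conjI allI impI)
    show "0 < min e0 (-\<bar>B\<bar> - k)" using e0(1) k by simp
    fix e assume e: "0 < e \<and> e < min e0 (-\<bar>B\<bar> - k)"
    show "\<exists>Phi. is_arg_lift A B R e Phi" using e0(2) cn e by simp
    fix Phi assume "is_arg_lift A B R e Phi"
    then have "vals A B R n e Phi" using e0(2) cn e by simp
    then show "Phi k = 2 * pi * (real n - real j) + Arg (a1 A B R (of_real k))"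
      unfolding vals_def using e j k by auto
  qed
qed

lemma val_om:
  assumes cn: "condn A B R n" and j: "1 \<le> j" "j \<le> n"
  shows "arg_a1 A B R (-(2 * real j - 1) * pi / (4 * R)) = 2 * pi * (real n - real j) + pi"
proof (rule arg_a1_eqI)
  obtain e0 where e0: "e0 > 0" "\<forall>e n. condn A B R n \<and> 0 < e \<and> e < e0 \<longrightarrow> (\<exists>Phi. is_arg_lift A B R e Phi) \<and>
      (\<forall>Phi. is_arg_lift A B R e Phi \<longrightarrow> vals A B R n e Phi)"
    using setup_e by blast
  show "\<exists>e0>0. \<forall>e. 0 < e \<and> e < e0 \<longrightarrow> (\<exists>Phi. is_arg_lift A B R e Phi) \<and>
      (\<forall>Phi. is_arg_lift A B R e Phi \<longrightarrow> Phi (-(2 * real j - 1) * pi / (4 * R)) = 2 * pi * (real n - real j) + pi)"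
  proof (intro exI[of _ e0] conjI allI impI)
    show "0 < e0" using e0(1) .
    fix e assume e: "0 < e \<and> e < e0"
    show "\<exists>Phi. is_arg_lift A B R e Phi" using e0(2) cn e by simp
    fix Phi assume "is_arg_lift A B R e Phi"
    then have "vals A B R n e Phi" using e0(2) cn e by simp
    then show "Phi (-(2 * real j - 1) * pi / (4 * R)) = 2 * pi * (real n - real j) + pi"
      unfolding vals_def using j by auto
  qed
qed

lemma val_right:
  assumes cn: "condn A B R n" and k: "-\<bar>B\<bar> < k" "k < 0"
  shows "arg_a1 A B R k = 2 * pi * real n + Arg (a1 A B R (of_real k))"
proof (rule arg_a1_eqI)
  obtain e0 where e0: "e0 > 0" "\<forall>e n. condn A B R n \<and> 0 < e \<and> e < e0 \<longrightarrow> (\<exists>Phi. is_arg_lift A B R e Phi) \<and>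
      (\<forall>Phi. is_arg_lift A B R e Phi \<longrightarrow> vals A B R n e Phi)"
    using setup_e by blast
  show "\<exists>e0>0. \<forall>e. 0 < e \<and> e < e0 \<longrightarrow> (\<exists>Phi. is_arg_lift A B R e Phi) \<and>
      (\<forall>Phi. is_arg_lift A B R e Phi \<longrightarrow> Phi k = 2 * pi * real n + Arg (a1 A B R (of_real k)))"
  proof (intro exI[of _ "min e0 (k + \<bar>B\<bar>)"] conjI allI impI)
    show "0 < min e0 (k + \<bar>B\<bar>)" using e0(1) k by simp
    fix e assume e: "0 < e \<and> e < min e0 (k + \<bar>B\<bar>)"
    show "\<exists>Phi. is_arg_lift A B R e Phi" using e0(2) cn e by simp
    fix Phi assume "is_arg_lift A B R e Phi"
    then have "vals A B R n e Phi" using e0(2) cn e by simp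
    then show "Phi k = 2 * pi * real n + Arg (a1 A B R (of_real k))"
      unfolding vals_def using e k by auto
  qed
qed

end



lemma Arg_lt_pi_nonpos: "z \<notin> \<real>\<^sub>\<le>\<^sub>0 \<Longrightarrow> -pi < Arg z \<and> Arg z < pi"
  using mpi_less_Arg[of z] Arg_le_pi[of z] Arg_eq_pi[of z] by (auto simp: complex_nonpos_Reals_iff)

context prm
begin

lemma div4R_lt: "k < x / (4 * R) \<longleftrightarrow> 4 * k * R < x"
  using R by (simp add: field_simps)

lemma div4R_gt: "x / (4 * R) < k \<longleftrightarrow> x < 4 * k * R"
  using R by (simp add: field_simps)

lemma arg_range_U:
  assumes "condn A B R n" "j \<le> n" "k < -\<bar>B\<bar>" "k < -(2 * real j - 1) * pi / (4 * R)"
    "j = n \<or> -(2 * real j + 1) * pi / (4 * R) < k"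
  shows "-pi < Arg (a1 A B R (of_real k)) \<and> Arg (a1 A B R (of_real k)) < pi"
proof -
  have "a1 A B R (of_real k) \<notin> \<real>\<^sub>\<le>\<^sub>0"
    using assms by (intro regU[OF assms(1,2,3)]) (auto simp: div4R_lt div4R_gt)
  then show ?thesis by (rule Arg_lt_pi_nonpos)
qed

lemma gfun_real_tendsto:
  "((\<lambda>k. gfun A B R (of_real k)) \<longlongrightarrow> gfun A B R (- of_real \<bar>B\<bar>)) (at (-\<bar>B\<bar>) within S)"
proof -
  have "((\<lambda>k. complex_of_real k) \<longlongrightarrow> complex_of_real (-\<bar>B\<bar>)) (at (-\<bar>B\<bar>) within S)"
    by (intro tendsto_of_real tendsto_ident_at)
  then have "((\<lambda>k. complex_of_real k) \<longlongrightarrow> - complex_of_real \<bar>B\<bar>) (at (-\<bar>B\<bar>) within S)" by simp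
  then show ?thesis by (rule isCont_tendsto_compose[OF gfun_cont])
qed

lemma a1_gfun_real: "k \<noteq> -\<bar>B\<bar> \<Longrightarrow> k < 0 \<Longrightarrow> a1 A B R (of_real k) = gfun A B R (of_real k) / of_real (k + \<bar>B\<bar>)"
proof -
  assume k: "k \<noteq> -\<bar>B\<bar>" "k < 0"
  have "complex_of_real k \<noteq> of_real \<bar>B\<bar>" using k b_pos by (metis abs_ge_zero not_le of_real_eq_iff)
  moreover have "complex_of_real k \<noteq> - of_real \<bar>B\<bar>" using k by (metis of_real_eq_iff of_real_minus)
  ultimately show ?thesis using a1_gfun by simp
qed

lemma lims_n:
  assumes cn: "condn A B R n"
  shows "(arg_a1 A B R \<longlongrightarrow> 2 * pi * real n - 4 * \<bar>B\<bar> * R) (at_left (-\<bar>B\<bar>))"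
    and "(arg_a1 A B R \<longlongrightarrow> 2 * pi * real n + pi - 4 * \<bar>B\<bar> * R) (at_right (-\<bar>B\<bar>))"
    and "\<forall>k\<in>{-\<bar>B\<bar><..<0}. arg_a1 A B R k \<in> {2 * pi * real n<..<2 * pi * real n + pi}"
    and "4 * B^2 - A^2 > 0 \<Longrightarrow> (arg_a1 A B R \<longlongrightarrow> 2 * pi * real n) (at_left 0)"
    and "4 * B^2 - A^2 < 0 \<Longrightarrow> (arg_a1 A B R \<longlongrightarrow> 2 * pi * real n + pi) (at_left 0)"
proof -
  define th where "th = 4 * \<bar>B\<bar> * R"
  define r where "r = A^2/(8 * \<bar>B\<bar>)"
  have r: "r > 0" unfolding r_def using A b_pos by simp
  have th: "0 < th" "th < pi" unfolding th_def using B0 Bpi by auto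
  have g0: "gfun A B R (- of_real \<bar>B\<bar>) = complex_of_real r * cis (pi - th)"
    unfolding r_def th_def by (rule gfun_at)
  have mg0: "- gfun A B R (- of_real \<bar>B\<bar>) = complex_of_real r * cis (- th)"
  proof -
    have h: "- cis (pi - th) = cis (- th)" using minus_cis'[of "pi - th"] by simp
    have "- gfun A B R (- of_real \<bar>B\<bar>) = complex_of_real r * (- cis (pi - th))" unfolding g0 by simp
    then show ?thesis unfolding h .
  qed
  have kkb: "-(pi / (4 * R)) < -\<bar>B\<bar>" using kk_b by simp
  have nb: "-\<bar>B\<bar> < (0::real)" using b_pos by simp
  have evL: "\<forall>\<^sub>F k in at_left (-\<bar>B\<bar>). 2 * pi * real n + Arg (- gfun A B R (of_real k)) = arg_a1 A B R k"
    using eventually_at_left_real[OF kkb]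
  proof (rule eventually_mono)
    fix k assume k: "k \<in> {-(pi / (4 * R))<..<-\<bar>B\<bar>}"
    have "k < 0" using k b_pos by (simp add: abs_ge_zero) linarith
    have "0 < pi / (4 * R)" using R by simp
    then have p1: "k < -(2 * real 0 - 1) * pi / (4 * R)" using \<open>k < 0\<close> by simp
    have p2: "-(2 * real 0 + 1) * pi / (4 * R) < k" using k by simp
    have "arg_a1 A B R k = 2 * pi * (real n - real 0) + Arg (a1 A B R (of_real k))"
      using k p2 by (intro val_U[OF cn _ _ p1]) auto
    moreover have "a1 A B R (of_real k) = (- gfun A B R (of_real k)) / of_real (-(k + \<bar>B\<bar>))"
    proof -
      have e1: "a1 A B R (of_real k) = gfun A B R (of_real k) / of_real (k + \<bar>B\<bar>)"
        using a1_gfun_real[of k] k \<open>k < 0\<close> by simp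
      have e2: "(- gfun A B R (of_real k)) / of_real (-(k + \<bar>B\<bar>)) = gfun A B R (of_real k) / of_real (k + \<bar>B\<bar>)"
        by (simp only: of_real_minus minus_divide_divide)
      show ?thesis using e1 e2 by simp
    qed
    moreover have "-(k + \<bar>B\<bar>) > 0" using k by simp
    ultimately show "2 * pi * real n + Arg (- gfun A B R (of_real k)) = arg_a1 A B R k"
      using Arg_divide_of_real[of "-(k + \<bar>B\<bar>)" "- gfun A B R (of_real k)"] by simp
  qed
  have "((\<lambda>k. 2 * pi * real n + Arg (- gfun A B R (of_real k))) \<longlongrightarrow> 2 * pi * real n + Arg (- gfun A B R (- of_real \<bar>B\<bar>))) (at_left (-\<bar>B\<bar>))"
    by (intro tendsto_intros gfun_real_tendsto) (use mg0 rcis_not_nonpos[OF r, of "-th"] th in auto)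
  moreover have "Arg (- gfun A B R (- of_real \<bar>B\<bar>)) = - th"
    unfolding mg0 using r th by (simp add: Arg_cis)
  ultimately show "(arg_a1 A B R \<longlongrightarrow> 2 * pi * real n - 4 * \<bar>B\<bar> * R) (at_left (-\<bar>B\<bar>))"
    using tendsto_cong[OF evL] unfolding th_def by simp
  have evR: "\<forall>\<^sub>F k in at_right (-\<bar>B\<bar>). 2 * pi * real n + Arg (gfun A B R (of_real k)) = arg_a1 A B R k"
    using eventually_at_right_real[OF nb]
  proof (rule eventually_mono)
    fix k assume k: "k \<in> {-\<bar>B\<bar><..<0}"
    have "arg_a1 A B R k = 2 * pi * real n + Arg (a1 A B R (of_real k))"
      using k by (intro val_right[OF cn]) auto
    moreover have "a1 A B R (of_real k) = gfun A B R (of_real k) / of_real (k + \<bar>B\<bar>)"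
      using a1_gfun_real[of k] k by simp
    moreover have "k + \<bar>B\<bar> > 0" using k by simp
    ultimately show "2 * pi * real n + Arg (gfun A B R (of_real k)) = arg_a1 A B R k"
      using Arg_divide_of_real[of "k + \<bar>B\<bar>" "gfun A B R (of_real k)"] by simp
  qed
  have "((\<lambda>k. 2 * pi * real n + Arg (gfun A B R (of_real k))) \<longlongrightarrow> 2 * pi * real n + Arg (gfun A B R (- of_real \<bar>B\<bar>))) (at_right (-\<bar>B\<bar>))"
    by (intro tendsto_intros gfun_real_tendsto) (use g0 rcis_not_nonpos[OF r, of "pi - th"] th in auto)
  moreover have "Arg (gfun A B R (- of_real \<bar>B\<bar>)) = pi - th"
    unfolding g0 using r th by (simp add: Arg_cis)
  ultimately show "(arg_a1 A B R \<longlongrightarrow> 2 * pi * real n + pi - 4 * \<bar>B\<bar> * R) (at_right (-\<bar>B\<bar>))"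
    using tendsto_cong[OF evR] unfolding th_def by (simp add: algebra_simps)
  show "\<forall>k\<in>{-\<bar>B\<bar><..<0}. arg_a1 A B R k \<in> {2 * pi * real n<..<2 * pi * real n + pi}"
  proof
    fix k assume k: "k \<in> {-\<bar>B\<bar><..<0}"
    have "Im (a1 A B R (of_real k)) > 0" using k by (intro Im_right) auto
    then have "0 < Arg (a1 A B R (of_real k)) \<and> Arg (a1 A B R (of_real k)) < pi" by (rule Arg_pos_range)
    then show "arg_a1 A B R k \<in> {2 * pi * real n<..<2 * pi * real n + pi}"
      using val_right[OF cn, of k] k by simp
  qed
  have a10: "a1 A B R 0 = complex_of_real (1 - A^2/(4 * B^2))"
    unfolding a1_def by (simp add: field_simps)
  have a1c: "((\<lambda>k. a1 A B R (of_real k)) \<longlongrightarrow> a1 A B R 0) (at_left 0)"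
  proof -
    have "B^2 \<noteq> 0" using b_pos by simp
    then have "isCont (a1 A B R) 0" unfolding a1_def by (intro continuous_intros) (simp add: flip: of_real_power)
    moreover have "((\<lambda>k. complex_of_real k) \<longlongrightarrow> 0) (at_left 0)"
      using tendsto_of_real[OF tendsto_ident_at[of "0::real" "{..<0}"]] by simp
    ultimately show ?thesis by (rule isCont_tendsto_compose)
  qed
  have evZ: "\<forall>\<^sub>F k in at_left 0. 2 * pi * real n + Arg (a1 A B R (of_real k)) = arg_a1 A B R k"
    using eventually_at_left_real[OF nb]
  proof (rule eventually_mono)
    fix k assume k: "k \<in> {-\<bar>B\<bar><..<0}"
    show "2 * pi * real n + Arg (a1 A B R (of_real k)) = arg_a1 A B R k"
      using val_right[OF cn, of k] k by simp
  qed
  show "4 * B^2 - A^2 > 0 \<Longrightarrow> (arg_a1 A B R \<longlongrightarrow> 2 * pi * real n) (at_left 0)"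
  proof -
    assume h: "4 * B^2 - A^2 > 0"
    then have pos: "1 - A^2/(4 * B^2) > 0" using b_pos by (simp add: field_simps)
    have "((\<lambda>k. 2 * pi * real n + Arg (a1 A B R (of_real k))) \<longlongrightarrow> 2 * pi * real n + Arg (a1 A B R 0)) (at_left 0)"
      by (intro tendsto_intros a1c) (use pos in \<open>auto simp: a10 complex_nonpos_Reals_iff\<close>)
    moreover have "Arg (a1 A B R 0) = 0" unfolding a10 Arg_of_real using pos by simp
    ultimately show ?thesis using tendsto_cong[OF evZ] by simp
  qed
  show "4 * B^2 - A^2 < 0 \<Longrightarrow> (arg_a1 A B R \<longlongrightarrow> 2 * pi * real n + pi) (at_left 0)"
  proof -
    assume h: "4 * B^2 - A^2 < 0"
    then have neg: "1 - A^2/(4 * B^2) < 0" using b_pos by (simp add: field_simps)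
    have ev2: "\<forall>\<^sub>F k in at_left 0. 2 * pi * real n + pi + Arg (- a1 A B R (of_real k)) = arg_a1 A B R k"
      using eventually_at_left_real[OF nb]
    proof (rule eventually_mono)
      fix k assume k: "k \<in> {-\<bar>B\<bar><..<0}"
      have im: "Im (a1 A B R (of_real k)) > 0" using k by (intro Im_right) auto
      then have ap: "Arg (a1 A B R (of_real k)) > 0" using Arg_pos_range by blast
      have "a1 A B R (of_real k) \<noteq> 0" using im by auto
      then have "Arg (- a1 A B R (of_real k)) = Arg (a1 A B R (of_real k)) - pi"
        using Arg_minus[of "a1 A B R (of_real k)"] ap by simp
      then show "2 * pi * real n + pi + Arg (- a1 A B R (of_real k)) = arg_a1 A B R k"
        using val_right[OF cn, of k] k by simp
    qed
    have "((\<lambda>k. 2 * pi * real n + pi + Arg (- a1 A B R (of_real k))) \<longlongrightarrow> 2 * pi * real n + pi + Arg (- a1 A B R 0)) (at_left 0)"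
      by (intro tendsto_intros a1c) (use neg in \<open>auto simp: a10 complex_nonpos_Reals_iff\<close>)
    moreover have "Arg (- a1 A B R 0) = 0"
    proof -
      have "- a1 A B R 0 = complex_of_real (- (1 - A^2/(4 * B^2)))" unfolding a10 by (simp only: of_real_minus)
      moreover have "Arg (complex_of_real (- (1 - A^2/(4 * B^2)))) = 0" unfolding Arg_of_real using neg by simp
      ultimately show ?thesis by (simp only:)
    qed
    ultimately show ?thesis using tendsto_cong[OF ev2] by simp
  qed
qed

end



context prm
begin

lemma U_gen:
  assumes cn: "condn A B R n" and i: "i \<le> n" and k: "k < -\<bar>B\<bar>" "k < -(2 * real i - 1) * pi / (4 * R)"
    "i = n \<or> -(2 * real i + 1) * pi / (4 * R) < k"
  shows "arg_a1 A B R k \<in> {2 * pi * (real n - real i) - pi<..<2 * pi * (real n - real i) + pi}"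
  using val_U[OF assms] arg_range_U[OF assms] by simp

lemma P1a: "condn A B R 0 \<Longrightarrow> \<forall>k < -\<bar>B\<bar>. arg_a1 A B R k \<in> {-pi<..<pi}"
proof (intro allI impI)
  fix k assume cn: "condn A B R 0" and k: "k < -\<bar>B\<bar>"
  have "0 < pi / (4 * R)" using R by simp
  moreover have "k < 0" using k b_pos by linarith
  ultimately have "k < -(2 * real 0 - 1) * pi / (4 * R)" by simp
  from U_gen[OF cn _ k this] show "arg_a1 A B R k \<in> {-pi<..<pi}" by simp
qed

lemma P2a:
  assumes cn: "condn A B R n"
  shows "\<forall>j\<in>{1..n}. arg_a1 A B R (omega B R (n - j + 1)) = (2 * real j - 1) * pi"
proof
  fix j assume j: "j \<in> {1..n}"
  define i where "i = n - j + 1"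
  have i: "1 \<le> i" "i \<le> n" using j unfolding i_def by auto
  have ri: "real i = real n - real j + 1" using j unfolding i_def by auto
  have "omega B R i = -(2 * real i - 1) * pi / (4 * R)" unfolding omega_def using i by simp
  then have "arg_a1 A B R (omega B R i) = 2 * pi * (real n - real i) + pi" using val_om[OF cn i] by simp
  then show "arg_a1 A B R (omega B R (n - j + 1)) = (2 * real j - 1) * pi"
    unfolding i_def[symmetric] ri by (simp add: algebra_simps)
qed

lemma P2b:
  assumes cn: "condn A B R n" and n: "n \<ge> 1"
  shows "\<forall>k < omega B R n. arg_a1 A B R k \<in> {-pi<..<pi}"
proof (intro allI impI)
  fix k assume k: "k < omega B R n"
  have o: "omega B R n = -(2 * real n - 1) * pi / (4 * R)" unfolding omega_def using n by simp
  have "k < -\<bar>B\<bar>" using k om_lt[OF n] unfolding o by linarith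
  from U_gen[OF cn order.refl this k[unfolded o]] show "arg_a1 A B R k \<in> {-pi<..<pi}" by simp
qed

lemma P2c:
  assumes cn: "condn A B R n"
  shows "\<forall>j\<in>{1..n}. \<forall>k\<in>{omega B R (n - j + 1)<..<omega B R (n - j)}.
           arg_a1 A B R k \<in> {2 * pi * real j - pi<..<2 * pi * real j + pi}"
proof (intro ballI)
  fix j k assume j: "j \<in> {1..n}" and k: "k \<in> {omega B R (n - j + 1)<..<omega B R (n - j)}"
  define i where "i = n - j"
  have i: "i \<le> n" unfolding i_def by simp
  have ri: "real n - real i = real j" using j unfolding i_def by auto
  have o1: "omega B R (n - j + 1) = -(2 * real i + 1) * pi / (4 * R)"
    unfolding omega_def i_def[symmetric] by (simp add: algebra_simps)
  have lo: "-(2 * real i + 1) * pi / (4 * R) < k" using k o1 by simp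
  have hi: "k < -\<bar>B\<bar> \<and> k < -(2 * real i - 1) * pi / (4 * R)"
  proof (cases "i = 0")
    case True
    then have "k < -\<bar>B\<bar>" using k unfolding i_def[symmetric] by (simp add: omega_def)
    moreover have "0 < pi / (4 * R)" using R by simp
    moreover have "k < 0" using calculation(1) b_pos by linarith
    ultimately show ?thesis using True by simp
  next
    case False
    then have o: "omega B R i = -(2 * real i - 1) * pi / (4 * R)" unfolding omega_def by simp
    have "k < -(2 * real i - 1) * pi / (4 * R)" using k o unfolding i_def[symmetric] by simp
    moreover have "-(2 * real i - 1) * pi / (4 * R) < -\<bar>B\<bar>" using om_lt[of i] False by simp
    ultimately show ?thesis by linarith
  qed
  from U_gen[OF cn i conjunct1[OF hi] conjunct2[OF hi]] lo
  show "arg_a1 A B R k \<in> {2 * pi * real j - pi<..<2 * pi * real j + pi}" unfolding ri by simp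
qed

end

theorem proposition6:
  fixes A B R :: real
  assumes "A > 0" and "R > 0" and "0 < 4 * \<bar>B\<bar> * R" and "4 * \<bar>B\<bar> * R < pi"
  shows
   "(R < pi / (2 * sqrt (4 * B^2 + A^2)) \<longrightarrow>
       (\<forall>k < -\<bar>B\<bar>. arg_a1 A B R k \<in> {-pi<..<pi}) \<and>
       (\<exists>\<theta>\<in>{0<..<pi}. (arg_a1 A B R \<longlongrightarrow> -\<theta>) (at_left (-\<bar>B\<bar>)) \<and>
                       (arg_a1 A B R \<longlongrightarrow> pi - \<theta>) (at_right (-\<bar>B\<bar>))) \<and>
       (\<forall>k\<in>{-\<bar>B\<bar><..<0}. arg_a1 A B R k \<in> {0<..<pi}))
    \<and>
    (\<forall>n::nat. n \<ge> 1 \<and> (2 * real n - 1) * pi / (2 * sqrt (4 * B^2 + A^2)) < R \<and>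
                R < (2 * real n + 1) * pi / (2 * sqrt (4 * B^2 + A^2)) \<longrightarrow>
       (\<forall>j\<in>{1..n}. arg_a1 A B R (omega B R (n - j + 1)) = (2 * real j - 1) * pi) \<and>
       (\<forall>k < omega B R n. arg_a1 A B R k \<in> {-pi<..<pi}) \<and>
       (\<forall>j\<in>{1..n}. \<forall>k\<in>{omega B R (n - j + 1)<..<omega B R (n - j)}.
           arg_a1 A B R k \<in> {2 * pi * real j - pi<..<2 * pi * real j + pi}) \<and>
       (\<exists>\<theta>\<in>{0<..<pi}. (arg_a1 A B R \<longlongrightarrow> 2 * pi * real n - \<theta>) (at_left (-\<bar>B\<bar>)) \<and>
                       (arg_a1 A B R \<longlongrightarrow> 2 * pi * real n + pi - \<theta>) (at_right (-\<bar>B\<bar>))) \<and>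
       (\<forall>k\<in>{-\<bar>B\<bar><..<0}. arg_a1 A B R k \<in> {2 * pi * real n<..<2 * pi * real n + pi}))
    \<and>
    (4 * B^2 - A^2 > 0 \<longrightarrow>
       (R < pi / (2 * sqrt (4 * B^2 + A^2)) \<longrightarrow> (arg_a1 A B R \<longlongrightarrow> 0) (at_left 0)) \<and>
       (\<forall>n::nat. n \<ge> 1 \<and> (2 * real n - 1) * pi / (2 * sqrt (4 * B^2 + A^2)) < R \<and>
                R < (2 * real n + 1) * pi / (2 * sqrt (4 * B^2 + A^2)) \<longrightarrow>
          (arg_a1 A B R \<longlongrightarrow> 2 * pi * real n) (at_left 0)))
    \<and>
    (4 * B^2 - A^2 < 0 \<longrightarrow>
       (R < pi / (2 * sqrt (4 * B^2 + A^2)) \<longrightarrow> (arg_a1 A B R \<longlongrightarrow> pi) (at_left 0)) \<and>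
       (\<forall>n::nat. n \<ge> 1 \<and> (2 * real n - 1) * pi / (2 * sqrt (4 * B^2 + A^2)) < R \<and>
                R < (2 * real n + 1) * pi / (2 * sqrt (4 * B^2 + A^2)) \<longrightarrow>
          (arg_a1 A B R \<longlongrightarrow> 2 * pi * real n + pi) (at_left 0)))"
proof -
  interpret prm A B R using assms by unfold_locales
  have th: "4 * \<bar>B\<bar> * R \<in> {0<..<pi}" using assms by simp
  have cn0: "condn A B R 0" if "R < pi / (2 * sqrt (4 * B^2 + A^2))" using that by (simp add: condn_def)
  have cnn: "condn A B R n" if "n \<ge> 1 \<and> (2 * real n - 1) * pi / (2 * sqrt (4 * B^2 + A^2)) < R \<and>
                R < (2 * real n + 1) * pi / (2 * sqrt (4 * B^2 + A^2))" for n
    using that by (simp add: condn_def)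
  have part1: "(\<forall>k < -\<bar>B\<bar>. arg_a1 A B R k \<in> {-pi<..<pi}) \<and>
       (\<exists>\<theta>\<in>{0<..<pi}. (arg_a1 A B R \<longlongrightarrow> -\<theta>) (at_left (-\<bar>B\<bar>)) \<and>
                       (arg_a1 A B R \<longlongrightarrow> pi - \<theta>) (at_right (-\<bar>B\<bar>))) \<and>
       (\<forall>k\<in>{-\<bar>B\<bar><..<0}. arg_a1 A B R k \<in> {0<..<pi})" if "R < pi / (2 * sqrt (4 * B^2 + A^2))"
  proof -
    note c = cn0[OF that]
    show ?thesis using P1a[OF c] lims_n(1,2,3)[OF c] th by auto
  qed
  have part2: "(\<forall>j\<in>{1..n}. arg_a1 A B R (omega B R (n - j + 1)) = (2 * real j - 1) * pi) \<and>
       (\<forall>k < omega B R n. arg_a1 A B R k \<in> {-pi<..<pi}) \<and>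
       (\<forall>j\<in>{1..n}. \<forall>k\<in>{omega B R (n - j + 1)<..<omega B R (n - j)}.
           arg_a1 A B R k \<in> {2 * pi * real j - pi<..<2 * pi * real j + pi}) \<and>
       (\<exists>\<theta>\<in>{0<..<pi}. (arg_a1 A B R \<longlongrightarrow> 2 * pi * real n - \<theta>) (at_left (-\<bar>B\<bar>)) \<and>
                       (arg_a1 A B R \<longlongrightarrow> 2 * pi * real n + pi - \<theta>) (at_right (-\<bar>B\<bar>))) \<and>
       (\<forall>k\<in>{-\<bar>B\<bar><..<0}. arg_a1 A B R k \<in> {2 * pi * real n<..<2 * pi * real n + pi})"
    if h: "n \<ge> 1 \<and> (2 * real n - 1) * pi / (2 * sqrt (4 * B^2 + A^2)) < R \<and>
                R < (2 * real n + 1) * pi / (2 * sqrt (4 * B^2 + A^2))" for n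
  proof -
    note c = cnn[OF h]
    have n: "n \<ge> 1" using h by simp
    show ?thesis using P2a[OF c] P2b[OF c n] P2c[OF c] lims_n(1,2,3)[OF c] th by blast
  qed
  show ?thesis
    using part1 part2 lims_n(4,5)[OF cn0] lims_n(4,5)[OF cnn] by simp
qed


end
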